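(* For any integer $n\ge4$, the $n$-cycle satisfies $\beta(C_n)=n/2$, whereas its complement satisfies $\beta(\overline{C_n})=n/\lfloor n/2\rfloor$. In both cases $\beta_1=\lceil\beta\rceil$ while $\alpha=\lfloor\beta\rfloor$.
   Context: For an undirected graph $G$ on vertex set $[n]$, consider the index coding problem: a server holds messages $x_1,\dots,x_n\in\Sigma$ ($|\Sigma|>1$), receiver $i$ wants $x_i$ and knows $x_j$ for every neighbor $j$ of $i$. A solution is an encoding $\mathcal{E}:\Sigma^n\to\Sigma_P$ from which each receiver can recover its message given its side information, for all message values. $\beta_t(G)$ is the minimum of $\lceil\log_2|\Sigma_P|\rceil$ over solutions with $|\Sigma|=2^t$; $\beta_1(G)$ is this quantity for $t=1$ and $\beta(G)=\lim_t\beta_t(G)/t=\inf_t\beta_t(G)/t$. $\alpha(G)$ is the independence number and $\overline{C_n}$ is the complement of the $n$-cycle $C_n$. *)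

theory Defs
  imports Complex_Main "HOL-Library.FuncSet"
begin

text \<open>A graph on vertex set [n] = {0..<n} is given by n and a symmetric,
irreflexive adjacency relation G (only pairs inside {0..<n} matter).\<close>

definition cycle_graph :: "nat \<Rightarrow> nat \<Rightarrow> nat \<Rightarrow> bool" where
  "cycle_graph n i j \<longleftrightarrow> i < n \<and> j < n \<and> i \<noteq> j \<and>
      (j = (i + 1) mod n \<or> i = (j + 1) mod n)"

definition compl_graph :: "nat \<Rightarrow> (nat \<Rightarrow> nat \<Rightarrow> bool) \<Rightarrow> nat \<Rightarrow> nat \<Rightarrow> bool" where
  "compl_graph n G i j \<longleftrightarrow> i < n \<and> j < n \<and> i \<noteq> j \<and> \<not> G i j"

definition indep_set :: "nat \<Rightarrow> (nat \<Rightarrow> nat \<Rightarrow> bool) \<Rightarrow> nat set \<Rightarrow> bool" where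
  "indep_set n G S \<longleftrightarrow> S \<subseteq> {0..<n} \<and> (\<forall>i\<in>S. \<forall>j\<in>S. \<not> G i j)"

definition alpha :: "nat \<Rightarrow> (nat \<Rightarrow> nat \<Rightarrow> bool) \<Rightarrow> nat" where
  "alpha n G = Max (card ` {S. indep_set n G S})"

text \<open>Messages: x_i in the alphabet {0..<2^t}, i.e. |Sigma| = 2^t.
 Encoding E into the public alphabet P (a finite set); receiver i has
 decoder D i taking the codeword and its side information (x restricted
 to the neighbours of i).\<close>

definition messages :: "nat \<Rightarrow> nat \<Rightarrow> (nat \<Rightarrow> nat) set" where
  "messages n t = {0..<n} \<rightarrow>\<^sub>E {0..<2^t}"

definition is_ic_solution ::
  "nat \<Rightarrow> (nat \<Rightarrow> nat \<Rightarrow> bool) \<Rightarrow> nat \<Rightarrow> nat set \<Rightarrow> ((nat \<Rightarrow> nat) \<Rightarrow> nat) \<Rightarrow> bool" where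
  "is_ic_solution n G t P E \<longleftrightarrow> finite P \<and> E ` messages n t \<subseteq> P \<and>
     (\<exists>D :: nat \<Rightarrow> nat \<Rightarrow> (nat \<Rightarrow> nat) \<Rightarrow> nat.
        \<forall>i<n. \<forall>x\<in>messages n t. D i (E x) (restrict x {j. G i j}) = x i)"

definition beta_t :: "nat \<Rightarrow> (nat \<Rightarrow> nat \<Rightarrow> bool) \<Rightarrow> nat \<Rightarrow> nat" where
  "beta_t n G t = (LEAST k. \<exists>P E. is_ic_solution n G t P E \<and>
                      k = nat \<lceil>log 2 (real (card P))\<rceil>)"

definition beta :: "nat \<Rightarrow> (nat \<Rightarrow> nat \<Rightarrow> bool) \<Rightarrow> real" where
  "beta n G = (INF t\<in>{1::nat..}. real (beta_t n G t) / real t)"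

end

theory Submission
  imports Defs
begin


definition cnt :: "'a set \<Rightarrow> ('a \<Rightarrow> 'b) \<Rightarrow> 'a \<Rightarrow> nat" where
  "cnt \<Omega> f x = card {y\<in>\<Omega>. f y = f x}"

definition ent :: "'a set \<Rightarrow> ('a \<Rightarrow> 'b) \<Rightarrow> real" where
  "ent \<Omega> f = (\<Sum>x\<in>\<Omega>. log 2 (card \<Omega> / cnt \<Omega> f x)) / card \<Omega>"

lemma cnt_pos: "finite \<Omega> \<Longrightarrow> x \<in> \<Omega> \<Longrightarrow> 1 \<le> cnt \<Omega> f x"
proof -
  assume a: "finite \<Omega>" "x \<in> \<Omega>"
  have "x \<in> {y\<in>\<Omega>. f y = f x}" using a by simp
  moreover have "finite {y\<in>\<Omega>. f y = f x}" using a by simp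
  ultimately have "card {y\<in>\<Omega>. f y = f x} > 0" using card_gt_0_iff by blast
  thus ?thesis unfolding cnt_def by simp
qed

lemma cnt_le: "finite \<Omega> \<Longrightarrow> cnt \<Omega> f x \<le> card \<Omega>"
  unfolding cnt_def by (intro card_mono) auto

lemma log_le_lin: "0 < y \<Longrightarrow> log 2 y \<le> (y - 1) / ln 2"
  unfolding log_def using ln_le_minus_one[of y]
  by (simp add: divide_right_mono)

lemma key_sum:
  assumes fin: "finite \<Omega>"
  shows "(\<Sum>x\<in>\<Omega>. real (cnt \<Omega> (\<lambda>x. (f x, k x)) x) * real (cnt \<Omega> (\<lambda>x. (g x, k x)) x)
            / (real (cnt \<Omega> (\<lambda>x. (f x, g x, k x)) x) * real (cnt \<Omega> k x))) \<le> real (card \<Omega>)"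
proof -
  define Nk where "Nk x = real (cnt \<Omega> k x)" for x
  define N3 where "N3 x = real (cnt \<Omega> (\<lambda>x. (f x, g x, k x)) x)" for x
  have prod: "real (cnt \<Omega> (\<lambda>x. (f x, k x)) x) * real (cnt \<Omega> (\<lambda>x. (g x, k x)) x)
      = (\<Sum>y\<in>\<Omega>. \<Sum>z\<in>\<Omega>. of_bool (f y = f x \<and> k y = k x \<and> g z = g x \<and> k z = k x))" for x
  proof -
    have "real (cnt \<Omega> (\<lambda>x. (f x, k x)) x) = (\<Sum>y\<in>\<Omega>. of_bool (f y = f x \<and> k y = k x))"
      unfolding cnt_def using fin by (simp add: sum.If_cases Int_def conj_commute)
    moreover have "real (cnt \<Omega> (\<lambda>x. (g x, k x)) x) = (\<Sum>z\<in>\<Omega>. of_bool (g z = g x \<and> k z = k x))"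
      unfolding cnt_def using fin by (simp add: sum.If_cases Int_def conj_commute)
    moreover have pm: "\<And>P Q. (of_bool P * of_bool Q :: real) = of_bool (P \<and> Q)" by simp
    ultimately show ?thesis
      by (simp only: sum_product pm conj_assoc)
  qed
  have "(\<Sum>x\<in>\<Omega>. real (cnt \<Omega> (\<lambda>x. (f x, k x)) x) * real (cnt \<Omega> (\<lambda>x. (g x, k x)) x)
            / (N3 x * Nk x))
      = (\<Sum>x\<in>\<Omega>. \<Sum>y\<in>\<Omega>. \<Sum>z\<in>\<Omega>. of_bool (f y = f x \<and> k y = k x \<and> g z = g x \<and> k z = k x) / (N3 x * Nk x))"
    by (simp add: prod sum_divide_distrib)
  also have "\<dots> = (\<Sum>y\<in>\<Omega>. \<Sum>x\<in>\<Omega>. \<Sum>z\<in>\<Omega>. of_bool (f y = f x \<and> k y = k x \<and> g z = g x \<and> k z = k x) / (N3 x * Nk x))"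
    by (rule sum.swap)
  also have "\<dots> = (\<Sum>y\<in>\<Omega>. \<Sum>z\<in>\<Omega>. \<Sum>x\<in>\<Omega>. of_bool (f y = f x \<and> k y = k x \<and> g z = g x \<and> k z = k x) / (N3 x * Nk x))"
    by (rule sum.cong[OF refl], rule sum.swap)
  also have "\<dots> \<le> (\<Sum>y\<in>\<Omega>. \<Sum>z\<in>\<Omega>. of_bool (k z = k y) / Nk y)"
  proof (intro sum_mono)
    fix y z assume y: "y \<in> \<Omega>" and z: "z \<in> \<Omega>"
    define X where "X = {x\<in>\<Omega>. f y = f x \<and> k y = k x \<and> g z = g x \<and> k z = k x}"
    have finX: "finite X" using fin unfolding X_def by auto
    have eq: "(\<Sum>x\<in>\<Omega>. of_bool (f y = f x \<and> k y = k x \<and> g z = g x \<and> k z = k x) / (N3 x * Nk x))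
        = (\<Sum>x\<in>X. 1 / (real (card X) * Nk y))"
    proof -
      have "(\<Sum>x\<in>\<Omega>. of_bool (f y = f x \<and> k y = k x \<and> g z = g x \<and> k z = k x) / (N3 x * Nk x))
          = (\<Sum>x\<in>X. 1 / (N3 x * Nk x))"
        unfolding X_def using fin by (simp add: sum.inter_filter) (intro sum.cong; simp)
      also have "\<dots> = (\<Sum>x\<in>X. 1 / (real (card X) * Nk y))"
      proof (intro sum.cong refl)
        fix x assume x: "x \<in> X"
        have "{w\<in>\<Omega>. (f w, g w, k w) = (f x, g x, k x)} = X"
          using x unfolding X_def by auto
        hence "N3 x = real (card X)" unfolding N3_def cnt_def by simp
        moreover have "Nk x = Nk y" using x unfolding X_def Nk_def cnt_def by simp
        ultimately show "1 / (N3 x * Nk x) = 1 / (real (card X) * Nk y)" by simp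
      qed
      finally show ?thesis .
    qed
    show "(\<Sum>x\<in>\<Omega>. of_bool (f y = f x \<and> k y = k x \<and> g z = g x \<and> k z = k x) / (N3 x * Nk x))
        \<le> of_bool (k z = k y) / Nk y"
    proof (cases "X = {}")
      case True
      have "0 \<le> Nk y" unfolding Nk_def by simp
      then show ?thesis using eq True by simp
    next
      case False
      hence "k z = k y" unfolding X_def by auto
      moreover have "card X > 0" using False finX by auto
      ultimately show ?thesis using eq by simp
    qed
  qed
  also have "\<dots> = (\<Sum>y\<in>\<Omega>. 1)"
  proof (intro sum.cong refl)
    fix y assume y: "y \<in> \<Omega>"
    have "(\<Sum>z\<in>\<Omega>. of_bool (k z = k y) / Nk y) = (\<Sum>z\<in>\<Omega>. of_bool (k z = k y)) / Nk y"
      by (simp add: sum_divide_distrib)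
    also have "(\<Sum>z\<in>\<Omega>. of_bool (k z = k y)) = Nk y"
      unfolding Nk_def cnt_def using fin by (simp add: sum.If_cases Int_def)
    also have "Nk y / Nk y = 1"
      using cnt_pos[OF fin y, of k] unfolding Nk_def by simp
    finally show "(\<Sum>z\<in>\<Omega>. of_bool (k z = k y) / Nk y) = 1" .
  qed
  finally show ?thesis unfolding N3_def Nk_def by simp
qed

lemma ent_alt:
  assumes fin: "finite \<Omega>"
  shows "ent \<Omega> f = log 2 (card \<Omega>) - (\<Sum>x\<in>\<Omega>. log 2 (cnt \<Omega> f x)) / card \<Omega>"
proof (cases "\<Omega> = {}")
  case True thus ?thesis unfolding ent_def by (simp add: log_def)
next
  case False
  hence c: "card \<Omega> > 0" using fin by auto
  have "(\<Sum>x\<in>\<Omega>. log 2 (card \<Omega> / cnt \<Omega> f x)) = (\<Sum>x\<in>\<Omega>. log 2 (card \<Omega>) - log 2 (cnt \<Omega> f x))"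
  proof (intro sum.cong refl)
    fix x assume "x \<in> \<Omega>"
    hence "cnt \<Omega> f x \<ge> 1" using cnt_pos fin by auto
    thus "log 2 (card \<Omega> / cnt \<Omega> f x) = log 2 (card \<Omega>) - log 2 (cnt \<Omega> f x)"
      using c by (simp add: log_divide)
  qed
  also have "\<dots> = card \<Omega> * log 2 (card \<Omega>) - (\<Sum>x\<in>\<Omega>. log 2 (cnt \<Omega> f x))"
    by (simp add: sum_subtractf)
  finally show ?thesis unfolding ent_def using c by (simp add: field_simps)
qed

lemma ent_cong:
  assumes "\<And>x y. x \<in> \<Omega> \<Longrightarrow> y \<in> \<Omega> \<Longrightarrow> f x = f y \<longleftrightarrow> g x = g y"
  shows "ent \<Omega> f = ent \<Omega> g"
proof -
  have "cnt \<Omega> f x = cnt \<Omega> g x" if "x \<in> \<Omega>" for x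
    unfolding cnt_def using assms that by (intro arg_cong[where f=card]) auto
  hence "(\<Sum>x\<in>\<Omega>. log 2 (card \<Omega> / cnt \<Omega> f x)) = (\<Sum>x\<in>\<Omega>. log 2 (card \<Omega> / cnt \<Omega> g x))"
    by (intro sum.cong) auto
  thus ?thesis unfolding ent_def by simp
qed

lemma ent_mono:
  assumes fin: "finite \<Omega>"
    and "\<And>x y. x \<in> \<Omega> \<Longrightarrow> y \<in> \<Omega> \<Longrightarrow> g x = g y \<Longrightarrow> f x = f y"
  shows "ent \<Omega> f \<le> ent \<Omega> g"
proof -
  have "log 2 (cnt \<Omega> g x) \<le> log 2 (cnt \<Omega> f x)" if "x \<in> \<Omega>" for x
  proof -
    have "{y\<in>\<Omega>. g y = g x} \<subseteq> {y\<in>\<Omega>. f y = f x}" using assms(2) that by blast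
    hence "cnt \<Omega> g x \<le> cnt \<Omega> f x"
      unfolding cnt_def using fin by (intro card_mono) auto
    moreover have "cnt \<Omega> g x \<ge> 1" by (rule cnt_pos[OF fin that])
    ultimately show ?thesis by simp
  qed
  hence "(\<Sum>x\<in>\<Omega>. log 2 (cnt \<Omega> g x)) \<le> (\<Sum>x\<in>\<Omega>. log 2 (cnt \<Omega> f x))"
    by (intro sum_mono) auto
  hence "(\<Sum>x\<in>\<Omega>. log 2 (cnt \<Omega> g x)) / card \<Omega> \<le> (\<Sum>x\<in>\<Omega>. log 2 (cnt \<Omega> f x)) / card \<Omega>"
    by (rule divide_right_mono) simp
  thus ?thesis unfolding ent_alt[OF fin, of f] ent_alt[OF fin, of g] by linarith
qed

lemma ent_inj:
  assumes fin: "finite \<Omega>" and inj: "inj_on f \<Omega>"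
  shows "ent \<Omega> f = log 2 (card \<Omega>)"
proof -
  have "cnt \<Omega> f x = 1" if "x \<in> \<Omega>" for x
  proof -
    have "{y\<in>\<Omega>. f y = f x} = {x}" using inj that unfolding inj_on_def by auto
    thus ?thesis unfolding cnt_def by simp
  qed
  hence "(\<Sum>x\<in>\<Omega>. log 2 (cnt \<Omega> f x)) = 0" by (intro sum.neutral) simp
  thus ?thesis unfolding ent_alt[OF fin, of f] by simp
qed

lemma ent_const:
  assumes fin: "finite \<Omega>"
  shows "ent \<Omega> (\<lambda>x. c) = 0"
proof -
  have "cnt \<Omega> (\<lambda>x. c) x = card \<Omega>" for x unfolding cnt_def by simp
  hence "(\<Sum>x\<in>\<Omega>. log 2 (cnt \<Omega> (\<lambda>x. c) x)) = card \<Omega> * log 2 (card \<Omega>)" by simp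
  thus ?thesis unfolding ent_alt[OF fin, of "\<lambda>x. c"] by (cases "card \<Omega> = 0") (auto simp: log_def)
qed

lemma ent_submod:
  assumes fin: "finite \<Omega>"
  shows "ent \<Omega> (\<lambda>x. (f x, g x, k x)) + ent \<Omega> k \<le> ent \<Omega> (\<lambda>x. (f x, k x)) + ent \<Omega> (\<lambda>x. (g x, k x))"
proof (cases "\<Omega> = {}")
  case True thus ?thesis unfolding ent_def by simp
next
  case False
  hence c: "card \<Omega> > 0" using fin by auto
  define A where "A x = real (cnt \<Omega> (\<lambda>x. (f x, k x)) x)" for x
  define B where "B x = real (cnt \<Omega> (\<lambda>x. (g x, k x)) x)" for x
  define C where "C x = real (cnt \<Omega> (\<lambda>x. (f x, g x, k x)) x)" for x
  define D where "D x = real (cnt \<Omega> k x)" for x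
  have pos: "A x \<ge> 1" "B x \<ge> 1" "C x \<ge> 1" "D x \<ge> 1" if "x \<in> \<Omega>" for x
    unfolding A_def B_def C_def D_def using cnt_pos[OF fin that] by auto
  define r where "r x = A x * B x / (C x * D x)" for x
  have ks: "(\<Sum>x\<in>\<Omega>. r x) \<le> card \<Omega>"
    unfolding r_def A_def B_def C_def D_def by (rule key_sum[OF fin])
  have "(\<Sum>x\<in>\<Omega>. log 2 (r x)) \<le> (\<Sum>x\<in>\<Omega>. (r x - 1) / ln 2)"
  proof (intro sum_mono log_le_lin)
    fix x assume x: "x \<in> \<Omega>"
    show "0 < r x" using pos[OF x] unfolding r_def by simp
  qed
  also have "(\<Sum>x\<in>\<Omega>. (r x - 1) / ln 2) = ((\<Sum>x\<in>\<Omega>. r x) - card \<Omega>) / ln 2"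
    by (simp add: diff_divide_distrib sum_divide_distrib sum_subtractf)
  also have "\<dots> \<le> 0" using ks by (intro divide_nonpos_pos) auto
  finally have r0: "(\<Sum>x\<in>\<Omega>. log 2 (r x)) \<le> 0" .
  have "(\<Sum>x\<in>\<Omega>. log 2 (r x)) = (\<Sum>x\<in>\<Omega>. log 2 (A x) + log 2 (B x) - log 2 (C x) - log 2 (D x))"
  proof (intro sum.cong refl)
    fix x assume x: "x \<in> \<Omega>"
    show "log 2 (r x) = log 2 (A x) + log 2 (B x) - log 2 (C x) - log 2 (D x)"
      using pos[OF x] unfolding r_def by (simp add: log_mult log_divide)
  qed
  also have "\<dots> = (\<Sum>x\<in>\<Omega>. log 2 (A x)) + (\<Sum>x\<in>\<Omega>. log 2 (B x)) - (\<Sum>x\<in>\<Omega>. log 2 (C x)) - (\<Sum>x\<in>\<Omega>. log 2 (D x))"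
    by (simp only: sum.distrib sum_subtractf)
  finally have le0: "(\<Sum>x\<in>\<Omega>. log 2 (A x)) + (\<Sum>x\<in>\<Omega>. log 2 (B x)) \<le> (\<Sum>x\<in>\<Omega>. log 2 (C x)) + (\<Sum>x\<in>\<Omega>. log 2 (D x))"
    using r0 by linarith
  have le: "(\<Sum>x\<in>\<Omega>. log 2 (A x)) / card \<Omega> + (\<Sum>x\<in>\<Omega>. log 2 (B x)) / card \<Omega>
      \<le> (\<Sum>x\<in>\<Omega>. log 2 (C x)) / card \<Omega> + (\<Sum>x\<in>\<Omega>. log 2 (D x)) / card \<Omega>"
    unfolding add_divide_distrib[symmetric] by (rule divide_right_mono[OF le0]) simp
  have eA: "ent \<Omega> (\<lambda>x. (f x, k x)) = log 2 (card \<Omega>) - (\<Sum>x\<in>\<Omega>. log 2 (A x)) / card \<Omega>"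
    unfolding A_def by (rule ent_alt[OF fin])
  have eB: "ent \<Omega> (\<lambda>x. (g x, k x)) = log 2 (card \<Omega>) - (\<Sum>x\<in>\<Omega>. log 2 (B x)) / card \<Omega>"
    unfolding B_def by (rule ent_alt[OF fin])
  have eC: "ent \<Omega> (\<lambda>x. (f x, g x, k x)) = log 2 (card \<Omega>) - (\<Sum>x\<in>\<Omega>. log 2 (C x)) / card \<Omega>"
    unfolding C_def by (rule ent_alt[OF fin])
  have eD: "ent \<Omega> k = log 2 (card \<Omega>) - (\<Sum>x\<in>\<Omega>. log 2 (D x)) / card \<Omega>"
    unfolding D_def by (rule ent_alt[OF fin])
  show ?thesis unfolding eA eB eC eD using le by linarith
qed

lemma ent_le_card:
  assumes fin: "finite \<Omega>" and ne: "\<Omega> \<noteq> {}"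
  shows "ent \<Omega> f \<le> log 2 (card (f ` \<Omega>))"
proof -
  have c: "card \<Omega> > 0" using fin ne by auto
  define K where "K = real (card (f ` \<Omega>))"
  have K: "K \<ge> 1" unfolding K_def using fin ne by (simp add: Suc_leI card_gt_0_iff)
  define N where "N x = real (cnt \<Omega> f x)" for x
  have Npos: "N x \<ge> 1" if "x \<in> \<Omega>" for x using cnt_pos[OF fin that] unfolding N_def by simp
  have sumN: "(\<Sum>x\<in>\<Omega>. 1 / N x) = K"
  proof -
    have "(\<Sum>x\<in>\<Omega>. 1 / N x) = (\<Sum>v\<in>f ` \<Omega>. \<Sum>x\<in>{x\<in>\<Omega>. f x = v}. 1 / N x)"
      using fin by (rule sum.image_gen)
    also have "\<dots> = (\<Sum>v\<in>f ` \<Omega>. 1)"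
    proof (intro sum.cong refl)
      fix v assume "v \<in> f ` \<Omega>"
      then obtain x0 where x0: "x0 \<in> \<Omega>" "v = f x0" by auto
      have "(\<Sum>x\<in>{x\<in>\<Omega>. f x = v}. 1 / N x) = (\<Sum>x\<in>{x\<in>\<Omega>. f x = v}. 1 / N x0)"
        by (intro sum.cong refl) (auto simp: N_def cnt_def x0)
      also have "\<dots> = N x0 / N x0" by (simp add: N_def cnt_def x0)
      also have "\<dots> = 1" using Npos[OF x0(1)] by simp
      finally show "(\<Sum>x\<in>{x\<in>\<Omega>. f x = v}. 1 / N x) = 1" .
    qed
    finally show ?thesis unfolding K_def by simp
  qed
  have "(\<Sum>x\<in>\<Omega>. log 2 (card \<Omega> / N x) - log 2 K) = (\<Sum>x\<in>\<Omega>. log 2 (card \<Omega> / (K * N x)))"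
  proof (intro sum.cong refl)
    fix x assume x: "x \<in> \<Omega>"
    show "log 2 (card \<Omega> / N x) - log 2 K = log 2 (card \<Omega> / (K * N x))"
      using K Npos[OF x] c by (simp add: log_divide log_mult)
  qed
  also have "\<dots> \<le> (\<Sum>x\<in>\<Omega>. (card \<Omega> / (K * N x) - 1) / ln 2)"
  proof (intro sum_mono log_le_lin)
    fix x assume x: "x \<in> \<Omega>"
    show "0 < real (card \<Omega>) / (K * N x)" using K Npos[OF x] c by simp
  qed
  also have "\<dots> = (card \<Omega> / K * (\<Sum>x\<in>\<Omega>. 1 / N x) - card \<Omega>) / ln 2"
    by (simp add: sum_divide_distrib[symmetric] sum_subtractf sum_distrib_left)
  also have "\<dots> = 0" using sumN K by simp
  finally have "(\<Sum>x\<in>\<Omega>. log 2 (card \<Omega> / N x)) \<le> card \<Omega> * log 2 K"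
    by (simp add: sum_subtractf)
  thus ?thesis unfolding ent_def N_def K_def using c by (simp add: divide_le_eq mult.commute)
qed


lemma restrict_eq_iff': "restrict x A = restrict y A \<longleftrightarrow> (\<forall>i\<in>A. x i = y i)"
  by (auto simp: restrict_def fun_eq_iff)

lemma messages_finite: "finite (messages n t)"
  unfolding messages_def by (intro finite_PiE) auto

lemma messages_ne: "messages n t \<noteq> {}"
  unfolding messages_def by (simp add: PiE_eq_empty_iff)

lemma messages_card: "card (messages n t) = 2 ^ (t * n)"
  unfolding messages_def by (simp add: card_PiE power_mult)

lemma ent_pair_le:
  assumes "finite \<Omega>"
  shows "ent \<Omega> (\<lambda>x. (f x, g x)) \<le> ent \<Omega> f + ent \<Omega> g"
proof -
  have "ent \<Omega> (\<lambda>x. (f x, g x, ())) + ent \<Omega> (\<lambda>x. ()) \<le> ent \<Omega> (\<lambda>x. (f x, ())) + ent \<Omega> (\<lambda>x. (g x, ()))"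
    using ent_submod[OF assms] .
  moreover have "ent \<Omega> (\<lambda>x. (f x, g x, ())) = ent \<Omega> (\<lambda>x. (f x, g x))" by (rule ent_cong) auto
  moreover have "ent \<Omega> (\<lambda>x. (f x, ())) = ent \<Omega> f" by (rule ent_cong) auto
  moreover have "ent \<Omega> (\<lambda>x. (g x, ())) = ent \<Omega> g" by (rule ent_cong) auto
  moreover have "ent \<Omega> (\<lambda>x. ()) = 0" using ent_const[OF assms] .
  ultimately show ?thesis by simp
qed

locale icsol =
  fixes n :: nat and G :: "nat \<Rightarrow> nat \<Rightarrow> bool" and t :: nat and P :: "nat set"
    and E :: "(nat \<Rightarrow> nat) \<Rightarrow> nat" and D :: "nat \<Rightarrow> nat \<Rightarrow> (nat \<Rightarrow> nat) \<Rightarrow> nat"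
  assumes finP: "finite P" and imgP: "E ` messages n t \<subseteq> P"
    and dec: "\<And>i x. i < n \<Longrightarrow> x \<in> messages n t \<Longrightarrow> D i (E x) (restrict x {j. G i j}) = x i"
begin

abbreviation "\<Omega> \<equiv> messages n t"

definition g :: "nat set \<Rightarrow> real" where
  "g A = ent \<Omega> (\<lambda>x. (E x, restrict x A))"

definition p :: real where "p = ent \<Omega> E"

lemma p_le: "p \<le> log 2 (card P)"
proof -
  have "p \<le> log 2 (card (E ` \<Omega>))" unfolding p_def
    using ent_le_card[OF messages_finite messages_ne] .
  also have "\<dots> \<le> log 2 (card P)"
  proof -
    have "card (E ` \<Omega>) \<ge> 1" using messages_finite messages_ne
      by (simp add: Suc_leI card_gt_0_iff)
    moreover have "card (E ` \<Omega>) \<le> card P" using finP imgP by (rule card_mono)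
    ultimately show ?thesis by simp
  qed
  finally show ?thesis .
qed

lemma g_full: "g {0..<n} = real t * real n"
proof -
  have "inj_on (\<lambda>x. (E x, restrict x {0..<n})) \<Omega>"
  proof (rule inj_onI)
    fix x y assume x: "x \<in> \<Omega>" and y: "y \<in> \<Omega>" and eq: "(E x, restrict x {0..<n}) = (E y, restrict y {0..<n})"
    have "restrict x {0..<n} = x" using x unfolding messages_def by (simp add: PiE_restrict)
    moreover have "restrict y {0..<n} = y" using y unfolding messages_def by (simp add: PiE_restrict)
    ultimately show "x = y" using eq by simp
  qed
  hence "g {0..<n} = log 2 (card \<Omega>)" unfolding g_def using ent_inj messages_finite by blast
  also have "\<dots> = real t * real n" by (simp add: messages_card log_nat_power)
  finally show ?thesis .
qed

lemma g_empty: "g {} = p"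
  unfolding g_def p_def by (rule ent_cong) auto

lemma g_le:
  assumes A: "A \<subseteq> {0..<n}"
  shows "g A \<le> p + real t * real (card A)"
proof -
  have "g A \<le> p + ent \<Omega> (\<lambda>x. restrict x A)"
    unfolding g_def p_def using ent_pair_le[OF messages_finite] .
  also have "ent \<Omega> (\<lambda>x. restrict x A) \<le> log 2 (card ((\<lambda>x. restrict x A) ` \<Omega>))"
    using ent_le_card[OF messages_finite messages_ne] .
  also have "\<dots> \<le> log 2 (card (PiE A (\<lambda>_. {0..<(2::nat)^t})))"
  proof -
    have finA: "finite A" using A finite_subset by blast
    have sub: "(\<lambda>x. restrict x A) ` \<Omega> \<subseteq> PiE A (\<lambda>_. {0..<(2::nat)^t})"
      using A unfolding messages_def by (auto simp: PiE_def Pi_def)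
    have "card ((\<lambda>x. restrict x A) ` \<Omega>) \<ge> 1" using messages_finite messages_ne
      by (simp add: Suc_leI card_gt_0_iff)
    moreover have "card ((\<lambda>x. restrict x A) ` \<Omega>) \<le> card (PiE A (\<lambda>_. {0..<(2::nat)^t}))"
      using sub finA by (intro card_mono) (auto intro: finite_PiE)
    ultimately show ?thesis by simp
  qed
  also have "\<dots> = real t * real (card A)"
  proof -
    have finA: "finite A" using A finite_subset by blast
    hence "card (PiE A (\<lambda>_. {0..<(2::nat)^t})) = (2^t)^card A" by (simp add: card_PiE)
    thus ?thesis by (simp add: log_nat_power power_mult[symmetric])
  qed
  finally show ?thesis by simp
qed

lemma g_mono:
  assumes "A \<subseteq> B"
  shows "g A \<le> g B"
  unfolding g_def using assms
  by (intro ent_mono[OF messages_finite]) (auto simp: restrict_eq_iff')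

lemma g_closure:
  assumes AB: "A \<subseteq> B" and cl: "\<And>i. i \<in> B \<Longrightarrow> i \<notin> A \<Longrightarrow> i < n \<and> {j. G i j} \<subseteq> A"
  shows "g A = g B"
  unfolding g_def
proof (rule ent_cong)
  fix x y assume x: "x \<in> \<Omega>" and y: "y \<in> \<Omega>"
  show "((E x, restrict x A) = (E y, restrict y A)) = ((E x, restrict x B) = (E y, restrict y B))"
  proof
    assume eq: "(E x, restrict x A) = (E y, restrict y A)"
    have "\<forall>i\<in>B. x i = y i"
    proof
      fix i assume i: "i \<in> B"
      show "x i = y i"
      proof (cases "i \<in> A")
        case True thus ?thesis using eq by (simp add: restrict_eq_iff')
      next
        case False
        with cl i have i1: "i < n" and sub: "{j. G i j} \<subseteq> A" by auto
        have "restrict x {j. G i j} = restrict y {j. G i j}"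
          using eq sub by (auto simp: restrict_eq_iff')
        hence "D i (E x) (restrict x {j. G i j}) = D i (E y) (restrict y {j. G i j})"
          using eq by simp
        thus ?thesis using dec[OF i1 x] dec[OF i1 y] by simp
      qed
    qed
    thus "(E x, restrict x B) = (E y, restrict y B)" using eq by (simp add: restrict_eq_iff')
  next
    assume "(E x, restrict x B) = (E y, restrict y B)"
    thus "(E x, restrict x A) = (E y, restrict y A)" using AB by (auto simp: restrict_eq_iff')
  qed
qed

lemma g_submod: "g (A \<union> B) + g (A \<inter> B) \<le> g A + g B"
proof -
  let ?f = "\<lambda>x. restrict x A" and ?h = "\<lambda>x. restrict x B" and ?k = "\<lambda>x. (E x, restrict x (A \<inter> B))"
  have s: "ent \<Omega> (\<lambda>x. (?f x, ?h x, ?k x)) + ent \<Omega> ?k \<le> ent \<Omega> (\<lambda>x. (?f x, ?k x)) + ent \<Omega> (\<lambda>x. (?h x, ?k x))"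
    using ent_submod[OF messages_finite] .
  have 1: "ent \<Omega> (\<lambda>x. (?f x, ?h x, ?k x)) = g (A \<union> B)"
    unfolding g_def by (rule ent_cong) (auto simp: restrict_eq_iff')
  have 2: "ent \<Omega> ?k = g (A \<inter> B)" unfolding g_def ..
  have 3: "ent \<Omega> (\<lambda>x. (?f x, ?k x)) = g A"
    unfolding g_def by (rule ent_cong) (auto simp: restrict_eq_iff')
  have 4: "ent \<Omega> (\<lambda>x. (?h x, ?k x)) = g B"
    unfolding g_def by (rule ent_cong) (auto simp: restrict_eq_iff')
  show ?thesis using s 1 2 3 4 by simp
qed

end


lemma slope_mono:
  fixes F :: "nat \<Rightarrow> real"
  assumes conc: "\<And>k. 1 \<le> k \<Longrightarrow> k < N \<Longrightarrow> F (k+1) + F (k-1) \<le> 2 * F k"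
  assumes "1 \<le> a" "a \<le> k" "k \<le> N"
  shows "F k - F (k-1) \<le> F a - F (a-1)"
  using assms(3,4)
proof (induction k rule: dec_induct)
  case base thus ?case by simp
next
  case (step k)
  have "F (k+1) + F (k-1) \<le> 2 * F k" using conc[of k] step assms(2) by simp
  thus ?case using step by simp
qed

lemma slope_upper:
  fixes F :: "nat \<Rightarrow> real"
  assumes conc: "\<And>k. 1 \<le> k \<Longrightarrow> k < N \<Longrightarrow> F (k+1) + F (k-1) \<le> 2 * F k"
  assumes a: "1 \<le> a" and ab: "a \<le> b" and bN: "b \<le> N"
  shows "F b - F a \<le> real (b - a) * (F a - F (a-1))"
  using ab bN
proof (induction b rule: dec_induct)
  case base thus ?case by simp
next
  case (step b)
  have "F (b+1) - F b \<le> F a - F (a-1)"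
    using slope_mono[OF conc a, where k="b+1"] step by simp
  moreover have "real (Suc b - a) = real (b - a) + 1" using step by simp
  ultimately show ?case using step by (simp add: algebra_simps)
qed

lemma slope_lower:
  fixes F :: "nat \<Rightarrow> real"
  assumes conc: "\<And>k. 1 \<le> k \<Longrightarrow> k < N \<Longrightarrow> F (k+1) + F (k-1) \<le> 2 * F k"
  assumes a: "1 \<le> a" and ab: "a \<le> b" and bN: "b < N"
  shows "F b - F a \<ge> real (b - a) * (F (b+1) - F b)"
  using ab bN
proof (induction a rule: inc_induct)
  case base thus ?case by simp
next
  case (step a)
  have "F (b+1) - F b \<le> F (a+1) - F a"
    using slope_mono[OF conc, where a="a+1" and k="b+1"] step by simp
  moreover have "real (b - a) = real (b - Suc a) + 1" using step by simp
  ultimately show ?case using step by (simp add: algebra_simps)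
qed


definition prog :: "nat \<Rightarrow> nat \<Rightarrow> nat \<Rightarrow> nat \<Rightarrow> nat set" where
  "prog n s r k = (\<lambda>j. (r + s * j) mod n) ` {..<k}"

lemma prog_inj:
  fixes n s r K :: nat
  assumes cop: "coprime n s" and K: "K \<le> n"
  shows "inj_on (\<lambda>j. (r + s * j) mod n) {..<K}"
proof (rule inj_onI)
  have aux: "a = b" if ab: "a \<le> b" "b < n" and eq: "(r + s * a) mod n = (r + s * b) mod n" for a b
  proof -
    have le: "r + s * a \<le> r + s * b" using ab by simp
    have "n dvd (r + s * b) - (r + s * a)" using mod_eq_dvd_iff_nat[OF le, of n] eq[symmetric] by blast
    also have "(r + s * b) - (r + s * a) = s * (b - a)" by (simp add: diff_mult_distrib2)
    finally have "n dvd b - a" using cop by (simp add: coprime_dvd_mult_right_iff)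
    moreover have "b - a < n" using ab by simp
    ultimately have "b - a = 0" using dvd_imp_le by (cases "b - a = 0") auto
    thus "a = b" using ab by simp
  qed
  fix a b assume "a \<in> {..<K}" "b \<in> {..<K}" "(r + s * a) mod n = (r + s * b) mod n"
  thus "a = b" using aux[of a b] aux[of b a] K by (cases "a \<le> b") auto
qed

lemma prog_sub: "0 < n \<Longrightarrow> prog n s r k \<subseteq> {0..<n}"
  unfolding prog_def by auto

lemma prog_card: "card (prog n s r k) \<le> k"
  unfolding prog_def using card_image_le[of "{..<k}"] by simp

lemma prog_full:
  assumes "0 < n" "coprime n s"
  shows "prog n s r n = {0..<n}"
proof -
  have "card (prog n s r n) = n" unfolding prog_def
    using prog_inj[OF assms(2) order.refl] by (simp add: card_image)
  thus ?thesis using prog_sub[OF assms(1)] by (intro card_subset_eq) auto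
qed

lemma prog_mod: "prog n s (r mod n) k = prog n s r k"
  unfolding prog_def by (simp add: mod_add_left_eq)

lemma prog_shift: "prog n s (r + s) k = (\<lambda>j. (r + s * j) mod n) ` {1..<k+1}"
proof -
  have "{1..<k+1} = Suc ` {..<k}" by (simp add: lessThan_atLeast0 image_Suc_atLeastLessThan)
  thus ?thesis unfolding prog_def by (simp add: image_image algebra_simps)
qed

lemma prog_union:
  assumes "1 \<le> k"
  shows "prog n s r k \<union> prog n s (r + s) k = prog n s r (k+1)"
proof -
  have "{..<k} \<union> {1..<k+1} = {..<k+1}" using assms by auto
  hence "(\<lambda>j. (r + s * j) mod n) ` {..<k} \<union> (\<lambda>j. (r + s * j) mod n) ` {1..<k+1} = (\<lambda>j. (r + s * j) mod n) ` {..<k+1}"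
    by (metis image_Un)
  thus ?thesis unfolding prog_shift by (simp add: prog_def)
qed

lemma prog_inter:
  assumes cop: "coprime n s" and k: "k + 1 \<le> n"
  shows "prog n s r k \<inter> prog n s (r + s) k = prog n s (r + s) (k - 1)"
proof -
  let ?f = "\<lambda>j. (r + s * j) mod n"
  have inj: "inj_on ?f {..<k+1}" using prog_inj[OF cop k] .
  have "prog n s r k \<inter> prog n s (r + s) k = ?f ` {..<k} \<inter> ?f ` {1..<k+1}"
    unfolding prog_shift by (simp add: prog_def)
  also have "\<dots> = ?f ` ({..<k} \<inter> {1..<k+1})"
    using inj by (intro inj_on_image_Int[symmetric]) auto
  also have "{..<k} \<inter> {1..<k+1} = {1..<k-1+1}" by auto
  also have "?f ` \<dots> = prog n s (r + s) (k - 1)" unfolding prog_shift ..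
  finally show ?thesis .
qed

lemma sum_rotate:
  fixes c :: nat
  assumes "0 < n"
  shows "(\<Sum>r<n. \<phi> ((r + c) mod n)) = (\<Sum>r<n. (\<phi> r :: real))"
proof -
  have inj: "inj_on (\<lambda>j. (c + 1 * j) mod n) {..<n}" by (rule prog_inj) auto
  have bij: "bij_betw (\<lambda>r. (r + c) mod n) {..<n} {..<n}"
  proof -
    have "(\<lambda>r. (r + c) mod n) ` {..<n} = {0..<n}"
      using prog_full[OF assms, of 1 c] unfolding prog_def by (simp add: add.commute)
    moreover have "inj_on (\<lambda>r. (r + c) mod n) {..<n}" using inj by (simp add: add.commute)
    ultimately show ?thesis unfolding bij_betw_def by (auto simp: lessThan_atLeast0)
  qed
  show ?thesis using sum.reindex_bij_betw[OF bij, of \<phi>] .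
qed

context icsol
begin

lemma g_union_le: "g (A \<union> B) \<le> g A + g B - p"
  using g_submod[of A B] g_mono[of "{}" "A \<inter> B"] g_empty by simp

definition F :: "nat \<Rightarrow> nat \<Rightarrow> real" where
  "F s k = (\<Sum>r<n. g (prog n s r k))"

lemma F_rot: "0 < n \<Longrightarrow> (\<Sum>r<n. g (prog n s (r + c) k)) = F s k"
  unfolding F_def using sum_rotate[of n "\<lambda>r. g (prog n s r k)" c] by (simp add: prog_mod)

lemma F_concave:
  assumes n: "0 < n" and cop: "coprime n s" and k: "1 \<le> k" "k < n"
  shows "F s (k+1) + F s (k-1) \<le> 2 * F s k"
proof -
  have "g (prog n s r (k+1)) + g (prog n s (r+s) (k-1)) \<le> g (prog n s r k) + g (prog n s (r+s) k)" for r
    using g_submod[of "prog n s r k" "prog n s (r+s) k"] prog_union[of k n s r] prog_inter[OF cop, of k r] k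
    by simp
  hence "(\<Sum>r<n. g (prog n s r (k+1)) + g (prog n s (r+s) (k-1))) \<le> (\<Sum>r<n. g (prog n s r k) + g (prog n s (r+s) k))"
    by (intro sum_mono)
  thus ?thesis unfolding sum.distrib F_rot[OF n] by (simp add: F_def)
qed

end


lemma cyc_nbr:
  assumes "i < n" "3 \<le> n"
  shows "{j. cycle_graph n i j} \<subseteq> {(i+1) mod n, (i + n - 1) mod n}"
proof
  fix j assume "j \<in> {j. cycle_graph n i j}"
  hence c: "j < n" "j = (i + 1) mod n \<or> i = (j + 1) mod n" unfolding cycle_graph_def by auto
  show "j \<in> {(i+1) mod n, (i + n - 1) mod n}"
  proof (cases "j = (i+1) mod n")
    case True thus ?thesis by simp
  next
    case False
    hence i: "i = (j+1) mod n" using c by auto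
    show ?thesis
    proof (cases "j + 1 < n")
      case True
      hence "i = j + 1" using i by simp
      hence "(i + n - 1) mod n = (j + n) mod n" by simp
      thus ?thesis using c by simp
    next
      case False
      hence "j + 1 = n" using c by simp
      hence "i = 0" using i by simp
      moreover have "j = n - 1" using \<open>j + 1 = n\<close> by simp
      ultimately have "(i + n - 1) mod n = j" using c(1) by simp
      thus ?thesis by simp
    qed
  qed
qed

lemma cyc_adj:
  assumes "i < n" "3 \<le> n"
  shows "cycle_graph n i ((i+1) mod n)" "cycle_graph n i ((i + n - 1) mod n)"
proof -
  show "cycle_graph n i ((i+1) mod n)"
    unfolding cycle_graph_def using assms
    by (cases "i + 1 < n") (auto simp: mod_if)
  have "i = ((i + n - 1) mod n + 1) mod n"
  proof (cases "i = 0")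
    case True thus ?thesis using assms by simp
  next
    case False
    hence "i + n - 1 = (i - 1) + n" by simp
    hence "(i + n - 1) mod n = (i - 1) mod n" by simp
    also have "\<dots> = i - 1" using assms by simp
    finally have "(i + n - 1) mod n = i - 1" .
    thus ?thesis using False assms by simp
  qed
  moreover have "i \<noteq> (i + n - 1) mod n"
  proof
    assume "i = (i + n - 1) mod n"
    hence "(i + (n - 1)) mod n = i mod n" using assms by simp
    hence "n dvd (i + (n - 1)) - i" using mod_eq_dvd_iff_nat[of i "i + (n - 1)" n] by simp
    hence "n dvd n - 1" by simp
    moreover have "0 < n - 1" using assms by simp
    ultimately have "n \<le> n - 1" using dvd_imp_le by blast
    thus False using assms by simp
  qed
  ultimately show "cycle_graph n i ((i + n - 1) mod n)"
    unfolding cycle_graph_def using assms by auto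
qed

lemma prog1_mem: "x \<in> prog n 1 r k \<longleftrightarrow> (\<exists>j<k. x = (r + j) mod n)"
  unfolding prog_def by auto

lemma prog_mem: "x \<in> prog n s r k \<longleftrightarrow> (\<exists>j<k. x = (r + s * j) mod n)"
  unfolding prog_def by auto


lemma modpred: fixes n d r :: nat shows "0 < n \<Longrightarrow> 1 \<le> d \<Longrightarrow> ((r + d) mod n + n - 1) mod n = (r + (d - 1)) mod n"
proof -
  assume n: "0 < n" and d: "1 \<le> d"
  have "(r + d) mod n + n - 1 = (r + d) mod n + (n - 1)" using n by simp
  hence "((r + d) mod n + n - 1) mod n = ((r + d) mod n + (n - 1)) mod n" by simp
  also have "\<dots> = (r + d + (n - 1)) mod n" by (rule mod_add_left_eq)
  also have "r + d + (n - 1) = (r + (d - 1)) + n" using n d by simp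
  finally show ?thesis by simp
qed

lemma modsucc: fixes n d r :: nat shows "((r + d) mod n + 1) mod n = (r + (d + 1)) mod n"
proof -
  have "((r + d) mod n + 1) mod n = (r + d + 1) mod n" by (rule mod_add_left_eq)
  thus ?thesis by (simp add: add.assoc)
qed

lemma cyc_nbr_rd:
  assumes "3 \<le> n" "1 \<le> d"
  shows "{j. cycle_graph n ((r + d) mod n) j} \<subseteq> {(r + (d+1)) mod n, (r + (d - 1)) mod n}"
proof -
  have "(r + d) mod n < n" using assms by simp
  hence "{j. cycle_graph n ((r + d) mod n) j} \<subseteq> {((r + d) mod n + 1) mod n, ((r + d) mod n + n - 1) mod n}"
    using cyc_nbr assms(1) by blast
  also have "((r + d) mod n + 1) mod n = (r + (d+1)) mod n" by (rule modsucc)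
  also have "((r + d) mod n + n - 1) mod n = (r + (d - 1)) mod n" using assms by (intro modpred) auto
  finally show ?thesis .
qed

context icsol
begin

lemma full_as_prog: "0 < n \<Longrightarrow> i < n \<Longrightarrow> \<exists>d<n. i = (r + d) mod n"
  using prog_full[of n 1 r] by (auto simp: prog_def)

lemma cyc_C2:
  assumes G: "G = cycle_graph n" and n: "3 \<le> n"
  shows "g (prog n 1 r (n-1)) = g {0..<n}"
proof (rule g_closure)
  show "prog n 1 r (n - 1) \<subseteq> {0..<n}" using prog_sub n by simp
  fix i assume i: "i \<in> {0..<n}" "i \<notin> prog n 1 r (n - 1)"
  have n0: "0 < n" using n by simp
  obtain d where d: "d < n" "i = (r + d) mod n" using full_as_prog[OF n0, of i r] i by auto
  have "\<not> d < n - 1"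
  proof
    assume "d < n - 1"
    hence "i \<in> prog n 1 r (n - 1)" unfolding prog_mem using d by (intro exI[of _ d]) simp
    thus False using i by simp
  qed
  hence dn: "d = n - 1" using d by simp
  have sub: "{j. G i j} \<subseteq> {(r + (d+1)) mod n, (r + (d - 1)) mod n}"
    unfolding G d(2) using cyc_nbr_rd[OF n, of d r] dn n by simp
  have 1: "(r + (d+1)) mod n \<in> prog n 1 r (n - 1)"
  proof -
    have "(r + (d+1)) mod n = (r + 0) mod n" using dn n by simp
    thus ?thesis unfolding prog_mem using n by (intro exI[of _ 0]) simp
  qed
  have 2: "(r + (d - 1)) mod n \<in> prog n 1 r (n - 1)"
    unfolding prog_mem using n dn by (intro exI[of _ "n - 2"]) (auto simp: numeral_2_eq_2)
  show "i < n \<and> {j. G i j} \<subseteq> prog n 1 r (n - 1)" using i sub 1 2 by auto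
qed


lemma card2_le: "card {a, b} \<le> 2"
  by (cases "a = b") auto

lemma cyc_C3:
  assumes G: "G = cycle_graph n" and n: "3 \<le> n"
  shows "g (prog n 1 r 3) \<le> p + 2 * real t"
proof -
  let ?A = "{(r + 0) mod n, (r + 2) mod n}"
  have a0: "(r + 0) mod n \<in> prog n 1 r 3" unfolding prog_mem by (intro exI[of _ 0]) simp
  have a2: "(r + 2) mod n \<in> prog n 1 r 3" unfolding prog_mem by (intro exI[of _ 2]) simp
  have AB: "?A \<subseteq> prog n 1 r 3" using a0 a2 by blast
  have "g ?A = g (prog n 1 r 3)"
  proof (rule g_closure[OF AB])
    fix i assume i: "i \<in> prog n 1 r 3" "i \<notin> ?A"
    then obtain j where j: "j < 3" "i = (r + j) mod n" unfolding prog_mem by auto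
    have j1: "j = 1" using j i by (cases j) (auto simp: numeral_2_eq_2 numeral_3_eq_3 less_Suc_eq)
    have "{j. G i j} \<subseteq> {(r + (1+1)) mod n, (r + (1 - 1)) mod n}"
      unfolding G j(2) j1 using cyc_nbr_rd[OF n, of 1 r] by simp
    also have "\<dots> = ?A" by (simp add: numeral_2_eq_2 insert_commute)
    finally show "i < n \<and> {j. G i j} \<subseteq> ?A" using j n by simp
  qed
  moreover have "g ?A \<le> p + real t * real (card ?A)"
    by (rule g_le) (use n in auto)
  moreover have "real t * real (card ?A) \<le> 2 * real t"
  proof -
    have "real (card ?A) \<le> 2" using card2_le[of "(r + 0) mod n" "(r + 2) mod n"] by linarith
    hence "real t * real (card ?A) \<le> real t * 2" by (intro mult_left_mono) auto
    thus ?thesis by simp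
  qed
  ultimately show ?thesis by linarith
qed

lemma cyc_C4:
  assumes G: "G = cycle_graph n" and nm: "n = 2 * m + 1" and m: "2 \<le> m"
  shows "g {0..<n} \<le> g (prog n 1 r 2) + real t * (real m - 1)"
proof -
  have n: "3 \<le> n" "0 < n" using nm m by auto
  define Q where "Q = (\<lambda>j. (r + (2 * j + 1)) mod n) ` {1..<m}"
  have Qmem: "(r + x) mod n \<in> Q" if "odd x" "3 \<le> x" "x < 2 * m" for x
  proof -
    have x: "x = 2 * (x div 2) + 1" using that(1) by simp
    have "x div 2 \<in> {1..<m}" using that by auto
    thus ?thesis unfolding Q_def using x by (intro image_eqI[of _ _ "x div 2"]) auto
  qed
  have P2mem: "(r + x) mod n \<in> prog n 1 r 2" if "x < 2" for x
    unfolding prog_mem using that by (intro exI[of _ x]) auto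
  let ?A = "prog n 1 r 2 \<union> Q"
  have Asub: "?A \<subseteq> {0..<n}" using prog_sub[OF n(2)] n(2) unfolding Q_def by auto
  have "g ?A = g {0..<n}"
  proof (rule g_closure[OF Asub])
    fix i assume i: "i \<in> {0..<n}" "i \<notin> ?A"
    obtain d where d: "d < n" "i = (r + d) mod n" using full_as_prog[OF n(2), of i r] i by auto
    have d2: "2 \<le> d" using P2mem[of d] d i by (cases "d < 2") auto
    have ev: "even d"
    proof (rule ccontr)
      assume "odd d"
      moreover have "3 \<le> d" using d2 \<open>odd d\<close> by (cases "d = 2") auto
      moreover have "d < 2 * m" using d nm \<open>odd d\<close> by (cases "d = 2 * m") auto
      ultimately have "i \<in> Q" using Qmem d by simp
      thus False using i by simp
    qed
    have sub: "{j. G i j} \<subseteq> {(r + (d+1)) mod n, (r + (d - 1)) mod n}"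
      unfolding G d(2) using cyc_nbr_rd[OF n(1), of d r] d2 by simp
    have 1: "(r + (d+1)) mod n \<in> ?A"
    proof (cases "d + 1 = n")
      case True
      hence "(r + (d+1)) mod n = (r + 0) mod n" by simp
      thus ?thesis using P2mem[of 0] by simp
    next
      case False
      hence "d + 1 < 2 * m" using d nm ev by auto
      thus ?thesis using Qmem[of "d+1"] ev d2 by simp
    qed
    have 2: "(r + (d - 1)) mod n \<in> ?A"
    proof (cases "d = 2")
      case True
      thus ?thesis using P2mem[of 1] by simp
    next
      case False
      hence "3 \<le> d - 1" using d2 ev by auto
      moreover have "d - 1 < 2 * m" using d nm d2 by auto
      moreover have "odd (d - 1)" using ev d2 by simp
      ultimately show ?thesis using Qmem[of "d - 1"] by simp
    qed
    show "i < n \<and> {j. G i j} \<subseteq> ?A" using i sub 1 2 by auto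
  qed
  moreover have "g ?A \<le> g (prog n 1 r 2) + g Q - p" by (rule g_union_le)
  moreover have "g Q \<le> p + real t * real (card Q)"
    by (rule g_le) (use n in \<open>auto simp: Q_def\<close>)
  moreover have "card Q \<le> m - 1" unfolding Q_def using card_image_le[of "{1..<m}"] by simp
  hence "real t * real (card Q) \<le> real t * (real m - 1)"
    using m by (intro mult_left_mono) auto
  ultimately show ?thesis by linarith
qed

lemma cyc_odd_lb:
  assumes G: "G = cycle_graph n" and nm: "n = 2 * m + 1" and m: "2 \<le> m"
  shows "real t * real n / 2 \<le> p"
proof -
  have n: "3 \<le> n" "0 < n" "5 \<le> n" using nm m by auto
  have conc: "\<And>k. 1 \<le> k \<Longrightarrow> k < n \<Longrightarrow> F 1 (k+1) + F 1 (k-1) \<le> 2 * F 1 k"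
    by (rule F_concave) (use n in auto)
  have sl: "F 1 (n-1) - F 1 3 \<le> real (n - 1 - 3) * (F 1 3 - F 1 (3 - 1))"
    by (rule slope_upper[OF conc]) (use n in auto)
  have Fn: "F 1 (n-1) = real n * g {0..<n}"
    unfolding F_def using cyc_C2[OF G n(1)] by simp
  have F3: "F 1 3 \<le> real n * (p + 2 * real t)"
  proof -
    have "F 1 3 \<le> (\<Sum>r<n. p + 2 * real t)" unfolding F_def
      by (intro sum_mono cyc_C3[OF G n(1)])
    thus ?thesis by simp
  qed
  have F2: "real n * g {0..<n} \<le> F 1 2 + real n * (real t * (real m - 1))"
  proof -
    have "(\<Sum>r<n. g {0..<n}) \<le> (\<Sum>r<n. g (prog n 1 r 2) + real t * (real m - 1))"
      by (intro sum_mono cyc_C4[OF G nm m])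
    thus ?thesis unfolding F_def by (simp add: sum.distrib)
  qed
  have gf: "g {0..<n} = real t * real n" by (rule g_full)
  define N where "N = real n"
  define T where "T = real t"
  define M where "M = real m"
  have NM: "N = 2 * M + 1" unfolding N_def M_def using nm by simp
  have M2: "M \<ge> 2" unfolding M_def using m by simp
  have T0: "T \<ge> 0" unfolding T_def by simp
  have r4: "real (n - 1 - 3) = N - 4" unfolding N_def using n by simp
  have a: "N * (T * N) - F 1 3 \<le> (N - 4) * (F 1 3 - F 1 2)"
    using sl Fn gf r4 unfolding N_def T_def by simp
  have b: "(N - 3) * F 1 3 \<le> (N - 3) * (N * (p + 2 * T))"
    using F3 NM M2 unfolding N_def T_def by (intro mult_left_mono) auto
  have c: "(N - 4) * (N * (T * N) - N * (T * (M - 1))) \<le> (N - 4) * F 1 2"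
    using F2 gf NM M2 unfolding N_def T_def M_def by (intro mult_left_mono) (auto simp: algebra_simps)
  have "N * (T * N) \<le> (N - 3) * (N * (p + 2 * T)) - (N - 4) * (N * (T * N) - N * (T * (M - 1)))"
    using a b c by (simp add: algebra_simps)
  hence "N * (T * N) \<le> N * ((N - 3) * (p + 2 * T) - (N - 4) * (T * N - T * (M - 1)))"
    by (simp add: algebra_simps)
  hence "T * N \<le> (N - 3) * (p + 2 * T) - (N - 4) * (T * N - T * (M - 1))"
    using NM M2 by (simp add: mult_le_cancel_left)
  hence "T * (2 * M + 1) * (M - 1) \<le> (2 * M - 2) * p"
    unfolding NM by (simp add: algebra_simps)
  hence "(M - 1) * (T * (2 * M + 1)) \<le> (M - 1) * (2 * p)"
    by (simp add: algebra_simps)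
  hence "T * (2 * M + 1) \<le> 2 * p" using M2 by (simp add: mult_le_cancel_left)
  thus ?thesis unfolding NM[symmetric] N_def T_def by simp
qed

end


lemma compl_nbr:
  assumes "i < n" "3 \<le> n"
  shows "{j. compl_graph n (cycle_graph n) i j} \<subseteq> {0..<n} - {i, (i+1) mod n, (i + n - 1) mod n}"
  using cyc_adj[OF assms] unfolding compl_graph_def by auto

context icsol
begin

lemma full_as_prog2: "odd n \<Longrightarrow> i < n \<Longrightarrow> \<exists>d<n. i = (r + 2 * d) mod n"
  using prog_full[of n 2 r] by (auto simp: prog_def)

lemma cyc_even_lb:
  assumes G: "G = cycle_graph n" and nm: "n = 2 * m" and m: "2 \<le> m"
  shows "real t * real n / 2 \<le> p"
proof -
  have n: "3 \<le> n" "0 < n" using nm m by auto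
  define Od where "Od = (\<lambda>j. 2 * j + 1) ` {..<m}"
  have Omem: "x \<in> Od" if "odd x" "x < n" for x
  proof -
    have "x = 2 * (x div 2) + 1" using that(1) by simp
    moreover have "x div 2 < m" using that nm by auto
    ultimately show ?thesis unfolding Od_def by (intro image_eqI[of _ _ "x div 2"]) auto
  qed
  have Osub: "Od \<subseteq> {0..<n}" unfolding Od_def nm by auto
  have "g Od = g {0..<n}"
  proof (rule g_closure[OF Osub])
    fix i assume i: "i \<in> {0..<n}" "i \<notin> Od"
    have ev: "even i" using Omem i by auto
    have sub: "{j. G i j} \<subseteq> {(i+1) mod n, (i + n - 1) mod n}" unfolding G using cyc_nbr i n by auto
    have 1: "(i+1) mod n \<in> Od"
    proof -
      have "i + 1 \<noteq> n" using ev nm by presburger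
      hence "i + 1 < n" using i by auto
      thus ?thesis using Omem[of "i+1"] ev by simp
    qed
    have 2: "(i + n - 1) mod n \<in> Od"
    proof (cases "i = 0")
      case True thus ?thesis using Omem[of "n - 1"] nm m by simp
    next
      case False
      hence e: "i + n - 1 = (i - 1) + n" by simp
      have "(i + n - 1) mod n = ((i - 1) + n) mod n" by (simp only: e)
      also have "\<dots> = (i - 1) mod n" by (rule mod_add_self2)
      also have "\<dots> = i - 1" using i by (intro mod_less) auto
      finally have "(i + n - 1) mod n = i - 1" .
      thus ?thesis using Omem[of "i - 1"] ev False i by simp
    qed
    show "i < n \<and> {j. G i j} \<subseteq> Od" using i sub 1 2 by auto
  qed
  moreover have "g Od \<le> p + real t * real (card Od)" using g_le[OF Osub] .
  moreover have "card Od \<le> m" unfolding Od_def using card_image_le[of "{..<m}"] by simp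
  hence "real t * real (card Od) \<le> real t * real m" by (intro mult_left_mono) auto
  moreover have "g {0..<n} = real t * real n" by (rule g_full)
  ultimately have "real t * real n \<le> p + real t * real m" by linarith
  moreover have "real t * real n = 2 * (real t * real m)" using nm by simp
  ultimately show ?thesis by linarith
qed

lemma compl_even_lb:
  assumes G: "G = compl_graph n (cycle_graph n)" and nm: "n = 2 * m" and m: "2 \<le> m"
  shows "2 * real t \<le> p"
proof -
  have n: "3 \<le> n" "0 < n" using nm m by auto
  let ?A = "{0..<n} - {0, 1}"
  have Asub: "?A \<subseteq> {0..<n}" by auto
  have "g ?A = g {0..<n}"
  proof (rule g_closure[OF Asub])
    fix i assume i: "i \<in> {0..<n}" "i \<notin> ?A"
    hence "i = 0 \<or> i = 1" by auto
    moreover have "{j. G 0 j} \<subseteq> ?A"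
    proof -
      have "{j. G 0 j} \<subseteq> {0..<n} - {0, (0+1) mod n, (0 + n - 1) mod n}" unfolding G using compl_nbr[of 0 n] n by blast
      also have "\<dots> \<subseteq> ?A" using n by auto
      finally show ?thesis .
    qed
    moreover have "{j. G 1 j} \<subseteq> ?A"
    proof -
      have "{j. G 1 j} \<subseteq> {0..<n} - {1, (1+1) mod n, (1 + n - 1) mod n}" unfolding G using compl_nbr[of 1 n] n by simp
      also have "\<dots> \<subseteq> ?A" using n by auto
      finally show ?thesis .
    qed
    ultimately show "i < n \<and> {j. G i j} \<subseteq> ?A" using i by auto
  qed
  moreover have "g ?A \<le> p + real t * real (card ?A)" using g_le[OF Asub] .
  moreover have "card ?A = n - 2" using n by (simp add: card_Diff_subset)
  moreover have "g {0..<n} = real t * real n" by (rule g_full)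
  ultimately have "real t * real n \<le> p + real t * real (n - 2)" by simp
  moreover have "real (n - 2) = real n - 2" using n by simp
  ultimately show ?thesis by (simp add: algebra_simps)
qed

end


context icsol
begin

lemma compl_D1:
  assumes G: "G = compl_graph n (cycle_graph n)" and n: "3 \<le> n" and od: "odd n"
  shows "g (prog n 2 r (n-1)) = g {0..<n}"
proof (rule g_closure)
  have n0: "0 < n" using n by simp
  show "prog n 2 r (n - 1) \<subseteq> {0..<n}" using prog_sub[OF n0] by simp
  fix i assume i: "i \<in> {0..<n}" "i \<notin> prog n 2 r (n - 1)"
  obtain d where d: "d < n" "i = (r + 2 * d) mod n" using full_as_prog2[OF od, of i r] i by auto
  have "\<not> d < n - 1"
  proof
    assume "d < n - 1"
    hence "i \<in> prog n 2 r (n - 1)" unfolding prog_mem using d by (intro exI[of _ d]) simp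
    thus False using i by simp
  qed
  hence dn: "d = n - 1" using d by simp
  have "{j. G i j} \<subseteq> prog n 2 r (n - 1)"
  proof
    fix j assume j: "j \<in> {j. G i j}"
    hence j1: "j < n" "j \<noteq> i" unfolding G compl_graph_def by auto
    obtain d' where d': "d' < n" "j = (r + 2 * d') mod n" using full_as_prog2[OF od j1(1), of r] by auto
    have "d' \<noteq> n - 1" using d' j1 d dn by auto
    hence "d' < n - 1" using d' by simp
    thus "j \<in> prog n 2 r (n - 1)" unfolding prog_mem using d' by (intro exI[of _ d']) simp
  qed
  thus "i < n \<and> {j. G i j} \<subseteq> prog n 2 r (n - 1)" using i by simp
qed

lemma compl_D2:
  assumes G: "G = compl_graph n (cycle_graph n)" and nm: "n = 2 * m + 1" and m: "2 \<le> m"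
  shows "g (prog n 2 r (n-2)) \<le> g (prog n 2 r (m-1)) + g (prog n 2 (r + 2 * m) (m-1)) - p"
proof -
  have n: "3 \<le> n" "0 < n" "odd n" using nm m by auto
  define a where "a = (r + 2 * (m - 1)) mod n"
  let ?B = "prog n 2 r (n-2)"
  let ?A = "?B - {a}"
  have aB: "a \<in> ?B" unfolding prog_mem a_def using nm m by (intro exI[of _ "m - 1"]) auto
  have e1: "(a + n - 1) mod n = (r + 2 * (n - 2)) mod n"
  proof -
    have "a + n - 1 = a + (n - 1)" using n by simp
    hence "(a + n - 1) mod n = (r + 2 * (m - 1) + (n - 1)) mod n"
      unfolding a_def by (simp only: mod_add_left_eq)
    also have "r + 2 * (m - 1) + (n - 1) = r + 2 * (n - 2)" using nm m by presburger
    finally show ?thesis .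
  qed
  have e2: "(a + 1) mod n = (r + 2 * (n - 1)) mod n"
  proof -
    have "(a + 1) mod n = (r + 2 * (m - 1) + 1) mod n"
      unfolding a_def by (simp only: mod_add_left_eq)
    also have "\<dots> = (r + 2 * (m - 1) + 1 + n) mod n" by (rule mod_add_self2[symmetric])
    also have "r + 2 * (m - 1) + 1 + n = r + 2 * (n - 1)" using nm m by presburger
    finally show ?thesis .
  qed
  have "g ?A = g ?B"
  proof (rule g_closure)
    show "?A \<subseteq> ?B" by auto
    fix i assume i: "i \<in> ?B" "i \<notin> ?A"
    hence ia: "i = a" by simp
    have an: "a < n" unfolding a_def using n by simp
    have "{j. G a j} \<subseteq> ?A"
    proof
      fix j assume "j \<in> {j. G a j}"
      hence j: "j \<in> {0..<n} - {a, (a+1) mod n, (a + n - 1) mod n}" unfolding G using compl_nbr[OF an n(1)] by blast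
      obtain d where d: "d < n" "j = (r + 2 * d) mod n" using full_as_prog2[OF n(3), of j r] j by auto
      have "d \<noteq> n - 1" using j d e2 by auto
      moreover have "d \<noteq> n - 2" using j d e1 by auto
      ultimately have "d < n - 2" using d by linarith
      hence "j \<in> ?B" unfolding prog_mem using d by (intro exI[of _ d]) simp
      thus "j \<in> ?A" using j by simp
    qed
    thus "i < n \<and> {j. G i j} \<subseteq> ?A" using ia an by simp
  qed
  moreover have "?A \<subseteq> prog n 2 r (m-1) \<union> prog n 2 (r + 2 * m) (m-1)"
  proof
    fix x assume x: "x \<in> ?A"
    have "\<exists>d<n - 2. x = (r + 2 * d) mod n" using x prog_mem[of x n 2 r "n-2"] by blast
    then obtain d where d: "d < n - 2" "x = (r + 2 * d) mod n" by blast
    have "d \<noteq> m - 1" using x d a_def by auto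
    show "x \<in> prog n 2 r (m-1) \<union> prog n 2 (r + 2 * m) (m-1)"
    proof (cases "d < m - 1")
      case True
      hence "x \<in> prog n 2 r (m-1)" unfolding prog_mem using d by (intro exI[of _ d]) simp
      thus ?thesis by simp
    next
      case False
      hence dm: "m \<le> d" using \<open>d \<noteq> m - 1\<close> by simp
      hence "d - m < m - 1" using d nm by simp
      moreover have "x = (r + 2 * m + 2 * (d - m)) mod n" using d dm
        by (simp add: algebra_simps)
      ultimately have "x \<in> prog n 2 (r + 2 * m) (m-1)" unfolding prog_mem by (intro exI[of _ "d - m"]) simp
      thus ?thesis by simp
    qed
  qed
  hence "g ?A \<le> g (prog n 2 r (m-1) \<union> prog n 2 (r + 2 * m) (m-1))" by (rule g_mono)
  moreover have "g (prog n 2 r (m-1) \<union> prog n 2 (r + 2 * m) (m-1)) \<le> g (prog n 2 r (m-1)) + g (prog n 2 (r + 2 * m) (m-1)) - p"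
    by (rule g_union_le)
  ultimately show ?thesis by linarith
qed

lemma compl_odd_lb:
  assumes G: "G = compl_graph n (cycle_graph n)" and nm: "n = 2 * m + 1" and m: "2 \<le> m"
  shows "real t * real n / real m \<le> p"
proof -
  have n: "3 \<le> n" "0 < n" "odd n" using nm m by auto
  have cop: "coprime n 2" using n(3) by simp
  have conc: "\<And>k. 1 \<le> k \<Longrightarrow> k < n \<Longrightarrow> F 2 (k+1) + F 2 (k-1) \<le> 2 * F 2 k"
    by (rule F_concave[OF n(2) cop])
  have sl: "F 2 (n-2) - F 2 (m-1) \<ge> real (n - 2 - (m - 1)) * (F 2 (n - 2 + 1) - F 2 (n-2))"
    by (rule slope_lower[OF conc]) (use nm m in auto)
  have e: "n - 2 + 1 = n - 1" using n by simp
  have Fn: "F 2 (n-1) = real n * g {0..<n}"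
    unfolding F_def using compl_D1[OF G n(1) n(3)] by simp
  have FY: "F 2 (n-2) \<le> 2 * F 2 (m-1) - real n * p"
  proof -
    have "F 2 (n-2) \<le> (\<Sum>r<n. g (prog n 2 r (m-1)) + g (prog n 2 (r + 2 * m) (m-1)) - p)"
      unfolding F_def by (intro sum_mono compl_D2[OF G nm m])
    also have "\<dots> = F 2 (m-1) + (\<Sum>r<n. g (prog n 2 (r + 2 * m) (m-1))) - real n * p"
      by (simp add: sum.distrib sum_subtractf F_def)
    also have "(\<Sum>r<n. g (prog n 2 (r + 2 * m) (m-1))) = F 2 (m-1)" by (rule F_rot[OF n(2)])
    finally show ?thesis by simp
  qed
  have FX: "F 2 (m-1) \<le> real n * (p + real t * (real m - 1))"
  proof -
    have "g (prog n 2 r (m-1)) \<le> p + real t * (real m - 1)" for r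
    proof -
      have "g (prog n 2 r (m-1)) \<le> p + real t * real (card (prog n 2 r (m-1)))"
        by (rule g_le[OF prog_sub[OF n(2)]])
      moreover have "real (card (prog n 2 r (m-1))) \<le> real m - 1" using prog_card[of n 2 r "m-1"] m by simp
      hence "real t * real (card (prog n 2 r (m-1))) \<le> real t * (real m - 1)" by (intro mult_left_mono) auto
      ultimately show ?thesis by linarith
    qed
    hence "F 2 (m-1) \<le> (\<Sum>r<n. p + real t * (real m - 1))" unfolding F_def by (intro sum_mono)
    thus ?thesis by simp
  qed
  have gf: "g {0..<n} = real t * real n" by (rule g_full)
  define N where "N = real n"
  define T where "T = real t"
  define M where "M = real m"
  define X where "X = F 2 (m-1)"
  define Y where "Y = F 2 (n-2)"
  define Z where "Z = N * (T * N)"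
  have NM: "N = 2 * M + 1" unfolding N_def M_def using nm by simp
  have M2: "M \<ge> 2" unfolding M_def using m by simp
  have rM: "real (n - 2 - (m - 1)) = M" unfolding M_def using nm m by simp
  have s1: "M * (Z - Y) \<le> Y - X" using sl unfolding e rM Fn gf X_def Y_def Z_def N_def T_def by (simp add: algebra_simps)
  have s2: "(M + 1) * Y \<le> (M + 1) * (2 * X - N * p)"
    using FY M2 unfolding X_def Y_def N_def by (intro mult_left_mono) auto
  have s3: "(2 * M + 1) * X \<le> (2 * M + 1) * (N * (p + T * (M - 1)))"
    using FX M2 unfolding X_def N_def T_def M_def by (intro mult_left_mono) auto
  have s1': "M * Z \<le> M * Y + Y - X" using s1 by (simp add: algebra_simps)
  have s2': "M * Y + Y \<le> 2 * (M * X) + 2 * X - M * (N * p) - N * p" using s2 by (simp add: algebra_simps)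
  have s3': "2 * (M * X) + X \<le> 2 * (M * (N * p)) + N * p + (2 * M + 1) * (N * (T * (M - 1)))" using s3 by (simp add: algebra_simps)
  have "M * Z \<le> M * (N * p) + (2 * M + 1) * (N * (T * (M - 1)))" using s1' s2' s3' by linarith
  hence "N * (M * (T * N)) \<le> N * (M * p + N * (T * (M - 1)))" unfolding Z_def NM by (simp add: algebra_simps)
  hence "M * (T * N) \<le> M * p + N * (T * (M - 1))" using NM M2 by (simp add: mult_le_cancel_left)
  hence "T * N \<le> M * p" by (simp add: algebra_simps)
  hence "T * N / M \<le> p" using M2 by (simp add: divide_le_eq mult.commute)
  thus ?thesis unfolding T_def N_def M_def by simp
qed

end


definition par :: "((nat \<times> nat) set) \<Rightarrow> (nat \<Rightarrow> nat) \<Rightarrow> bool" where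
  "par Sc x = odd (\<Sum>q\<in>Sc. of_bool (bit (x (fst q)) (snd q)) :: nat)"

definition lenc :: "nat \<Rightarrow> (nat \<Rightarrow> (nat \<times> nat) set) \<Rightarrow> (nat \<Rightarrow> nat) \<Rightarrow> nat" where
  "lenc K S x = horner_sum of_bool 2 (map (\<lambda>c. par (S c) x) [0..<K])"

definition ldec :: "nat \<Rightarrow> (nat \<Rightarrow> (nat \<times> nat) set) \<Rightarrow> (nat \<Rightarrow> nat \<Rightarrow> nat) \<Rightarrow> nat \<Rightarrow> nat \<Rightarrow> (nat \<Rightarrow> nat) \<Rightarrow> nat" where
  "ldec t S ch i w s = horner_sum of_bool 2
     (map (\<lambda>l. bit w (ch i l) \<noteq> par (S (ch i l) - {(i, l)}) s) [0..<t])"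

lemma lenc_bit: "c < K \<Longrightarrow> bit (lenc K S x) c = par (S c) x"
  unfolding lenc_def by (simp add: bit_horner_sum_bit_iff)

lemma lenc_less: "lenc K S x < 2 ^ K"
  unfolding lenc_def using horner_sum_of_bool_2_less[of "map (\<lambda>c. par (S c) x) [0..<K]"] by simp

lemma linear_code:
  assumes Sfin: "\<And>c. finite (S c)"
    and ch: "\<And>i l. i < n \<Longrightarrow> l < t \<Longrightarrow> ch i l < K \<and> (i, l) \<in> S (ch i l) \<and>
                 (\<forall>q\<in>S (ch i l). q \<noteq> (i, l) \<longrightarrow> G i (fst q))"
  shows "is_ic_solution n G t {0..<2^K} (lenc K S)"
  unfolding is_ic_solution_def
proof (intro conjI exI[of _ "ldec t S ch"] allI impI ballI)
  show "finite {0..<(2::nat)^K}" by simp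
  show "lenc K S ` messages n t \<subseteq> {0..<2 ^ K}" using lenc_less by auto
  fix i x assume i: "i < n" and x: "x \<in> messages n t"
  let ?s = "restrict x {j. G i j}"
  have xi: "x i < 2 ^ t" using x i unfolding messages_def by auto
  have bits: "(bit (lenc K S x) (ch i l) \<noteq> par (S (ch i l) - {(i, l)}) ?s) = bit (x i) l" if l: "l < t" for l
  proof -
    have c: "ch i l < K" "(i, l) \<in> S (ch i l)" and nb: "\<forall>q\<in>S (ch i l). q \<noteq> (i, l) \<longrightarrow> G i (fst q)"
      using ch[OF i l] by auto
    let ?f = "\<lambda>y q. of_bool (bit (y (fst q)) (snd q)) :: nat"
    have "(\<Sum>q\<in>S (ch i l). ?f x q) = ?f x (i, l) + (\<Sum>q\<in>S (ch i l) - {(i, l)}. ?f x q)"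
      using Sfin c(2) by (rule sum.remove)
    moreover have "(\<Sum>q\<in>S (ch i l) - {(i, l)}. ?f ?s q) = (\<Sum>q\<in>S (ch i l) - {(i, l)}. ?f x q)"
      using nb by (intro sum.cong refl) auto
    ultimately show ?thesis
      unfolding lenc_bit[OF c(1)] par_def by auto
  qed
  have "ldec t S ch i (lenc K S x) ?s = horner_sum of_bool 2 (map (bit (x i)) [0..<t])"
    unfolding ldec_def using bits by (intro arg_cong[where f="horner_sum of_bool 2"] map_cong) auto
  also have "\<dots> = take_bit t (x i)" by (rule horner_sum_bit_eq_take_bit)
  also have "\<dots> = x i" using xi by (simp add: take_bit_nat_eq_self_iff)
  finally show "ldec t S ch i (lenc K S x) ?s = x i" .
qed

lemma beta_t_le:
  assumes "is_ic_solution n G t {0..<2^K} E"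
  shows "beta_t n G t \<le> K"
proof -
  have "nat \<lceil>log 2 (real (card {0..<(2::nat)^K}))\<rceil> = K" by (simp add: log_nat_power)
  hence "\<exists>P E. is_ic_solution n G t P E \<and> K = nat \<lceil>log 2 (real (card P))\<rceil>"
    using assms by metis
  thus ?thesis unfolding beta_t_def by (rule Least_le)
qed


lemma dvd_of_mod_eq:
  fixes x :: int
  assumes "int j = x mod int n"
  shows "int n dvd x - int j"
  using assms by (simp add: minus_mod_eq_mult_div[symmetric])

lemma cyc_int:
  assumes c: "cycle_graph n i j"
  shows "int n dvd int j - int i - 1 \<or> int n dvd int j - int i + 1"
proof -
  have "j = (i + 1) mod n \<or> i = (j + 1) mod n" using c unfolding cycle_graph_def by auto
  thus ?thesis
  proof
    assume "j = (i + 1) mod n"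
    hence "int j = (int i + 1) mod int n" by (simp add: zmod_int add.commute)
    from dvd_of_mod_eq[OF this] have "int n dvd (int i + 1) - int j" .
    hence "int n dvd -((int i + 1) - int j)" by (simp only: dvd_minus_iff)
    thus ?thesis by (simp add: algebra_simps)
  next
    assume "i = (j + 1) mod n"
    hence "int i = (int j + 1) mod int n" by (simp add: zmod_int add.commute)
    from dvd_of_mod_eq[OF this] have "int n dvd (int j + 1) - int i" .
    thus ?thesis by (simp add: algebra_simps)
  qed
qed

lemma int_dvd_small:
  fixes k :: int
  assumes "int n dvd k" "\<bar>k\<bar> < int n"
  shows "k = 0"
proof (rule ccontr)
  assume "k \<noteq> 0"
  hence "\<bar>int n\<bar> \<le> \<bar>k\<bar>" using assms(1) by (rule dvd_imp_le_int)
  thus False using assms(2) by simp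
qed

lemma triv_code:
  assumes t: "0 < t"
  shows "is_ic_solution n G t {0..<2^(n*t)} (lenc (n*t) (\<lambda>c. {(c div t, c mod t)}))"
proof (rule linear_code[where ch="\<lambda>i l. i * t + l"])
  fix i l assume i: "i < n" and l: "l < t"
  have "i * t + l < n * t"
  proof -
    have "i * t + l < i * t + t" using l by simp
    also have "\<dots> = (i + 1) * t" by simp
    also have "\<dots> \<le> n * t" using i by (intro mult_right_mono) auto
    finally show ?thesis .
  qed
  moreover have "(i * t + l) div t = i" "(i * t + l) mod t = l" using l t by auto
  ultimately show "i * t + l < n * t \<and> (i, l) \<in> {((i * t + l) div t, (i * t + l) mod t)} \<and>
          (\<forall>q\<in>{((i * t + l) div t, (i * t + l) mod t)}. q \<noteq> (i, l) \<longrightarrow> G i (fst q))" by simp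
qed simp

lemma exists_sol: "0 < t \<Longrightarrow> \<exists>P E. is_ic_solution n G t P E"
  using triv_code by blast


lemma cyc_cases:
  assumes c: "cycle_graph n i j"
  shows "i < n \<and> j < n \<and> (j = i + 1 \<or> i = j + 1 \<or> (i = n - 1 \<and> j = 0) \<or> (j = n - 1 \<and> i = 0))"
proof -
  have ij: "i < n" "j < n" "j = (i + 1) mod n \<or> i = (j + 1) mod n" using c unfolding cycle_graph_def by auto
  have "j = i + 1 \<or> (i = n - 1 \<and> j = 0)" if "j = (i + 1) mod n"
  proof (cases "i + 1 < n")
    case True thus ?thesis using that by simp
  next
    case False hence "i + 1 = n" using ij by simp
    thus ?thesis using that by simp
  qed
  moreover have "i = j + 1 \<or> (j = n - 1 \<and> i = 0)" if "i = (j + 1) mod n"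
  proof (cases "j + 1 < n")
    case True thus ?thesis using that by simp
  next
    case False hence "j + 1 = n" using ij by simp
    thus ?thesis using that by simp
  qed
  ultimately show ?thesis using ij by blast
qed

lemma cyc_code1:
  assumes n: "3 \<le> n"
  shows "is_ic_solution n (cycle_graph n) 1 {0..<2^((n+1) div 2)}
           (lenc ((n+1) div 2) (\<lambda>c. {q. fst q < n \<and> snd q = 0 \<and> fst q div 2 = c}))"
proof (rule linear_code[where ch="\<lambda>i l. i div 2"])
  fix c show "finite {q. fst q < n \<and> snd q = 0 \<and> fst q div 2 = c}"
    by (rule finite_subset[of _ "{0..<n} \<times> {0}"]) auto
next
  fix i l assume i: "i < n" and l: "l < (1::nat)"
  have "i div 2 < (n + 1) div 2"
  proof -
    have "(i + 2) div 2 \<le> (n + 1) div 2" using i by (intro div_le_mono) simp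
    thus ?thesis by simp
  qed
  moreover have "cycle_graph n i j" if "j < n" "j div 2 = i div 2" "j \<noteq> i" for j
  proof -
    have "j = i + 1 \<or> i = j + 1" using that by presburger
    thus ?thesis unfolding cycle_graph_def using that i by auto
  qed
  ultimately show "i div 2 < (n + 1) div 2 \<and> (i, l) \<in> {q. fst q < n \<and> snd q = 0 \<and> fst q div 2 = i div 2} \<and>
      (\<forall>q\<in>{q. fst q < n \<and> snd q = 0 \<and> fst q div 2 = i div 2}. q \<noteq> (i, l) \<longrightarrow> cycle_graph n i (fst q))"
    using i l by auto
qed

lemma cyc_code2:
  assumes n: "3 \<le> n"
  shows "is_ic_solution n (cycle_graph n) 2 {0..<2^n} (lenc n (\<lambda>c. {(c, 1), ((c + 1) mod n, 0)}))"
proof (rule linear_code[where ch="\<lambda>i l. if l = 0 then (i + n - 1) mod n else i"])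
  fix i l assume i: "i < n" and l: "l < (2::nat)"
  have a1: "cycle_graph n i ((i+1) mod n)" and a2: "cycle_graph n i ((i + n - 1) mod n)"
    using cyc_adj[OF i n] by auto
  show "(if l = 0 then (i + n - 1) mod n else i) < n \<and>
       (i, l) \<in> {(if l = 0 then (i + n - 1) mod n else i, 1), (((if l = 0 then (i + n - 1) mod n else i) + 1) mod n, 0)} \<and>
       (\<forall>q\<in>{(if l = 0 then (i + n - 1) mod n else i, 1), (((if l = 0 then (i + n - 1) mod n else i) + 1) mod n, 0)}.
           q \<noteq> (i, l) \<longrightarrow> cycle_graph n i (fst q))"
  proof (cases "l = 0")
    case True
    have "((i + n - 1) mod n + 1) mod n = (i + n - 1 + 1) mod n" by (rule mod_add_left_eq)
    also have "i + n - 1 + 1 = i + n" using n by simp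
    also have "(i + n) mod n = i" using i by simp
    finally have e: "((i + n - 1) mod n + 1) mod n = i" .
    show ?thesis using True e a2 i n by auto
  next
    case False
    hence l1: "l = 1" using l by simp
    show ?thesis using l1 a1 i n by auto
  qed
qed simp

definition col :: "nat \<Rightarrow> nat \<Rightarrow> nat" where
  "col n i = (if odd n \<and> i = n - 1 then 2 else i mod 2)"

lemma col_ne:
  assumes c: "cycle_graph n i j" and n: "3 \<le> n"
  shows "col n i \<noteq> col n j"
proof -
  have cs: "i < n" "j < n" "j = i + 1 \<or> i = j + 1 \<or> (i = n - 1 \<and> j = 0) \<or> (j = n - 1 \<and> i = 0)"
    using cyc_cases[OF c] by auto
  show ?thesis
  proof (cases "even n")
    case True
    thus ?thesis using cs n unfolding col_def by auto presburger+
  next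
    case False
    thus ?thesis using cs n unfolding col_def by auto presburger+
  qed
qed

lemma compl_code1:
  assumes n: "3 \<le> n"
  shows "is_ic_solution n (compl_graph n (cycle_graph n)) 1 {0..<2^(if even n then 2 else 3)}
           (lenc (if even n then 2 else 3) (\<lambda>c. {q. fst q < n \<and> snd q = 0 \<and> col n (fst q) = c}))"
proof (rule linear_code[where ch="\<lambda>i l. col n i"])
  fix c show "finite {q. fst q < n \<and> snd q = 0 \<and> col n (fst q) = c}"
    by (rule finite_subset[of _ "{0..<n} \<times> {0}"]) auto
next
  fix i l assume i: "i < n" and l: "l < (1::nat)"
  have "col n i < (if even n then 2 else 3)" unfolding col_def by auto
  moreover have "compl_graph n (cycle_graph n) i j" if "j < n" "col n j = col n i" "j \<noteq> i" for j
    unfolding compl_graph_def using that i col_ne[of n i j] n by auto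
  ultimately show "col n i < (if even n then 2 else 3) \<and> (i, l) \<in> {q. fst q < n \<and> snd q = 0 \<and> col n (fst q) = col n i} \<and>
      (\<forall>q\<in>{q. fst q < n \<and> snd q = 0 \<and> col n (fst q) = col n i}. q \<noteq> (i, l) \<longrightarrow> compl_graph n (cycle_graph n) i (fst q))"
    using i l by auto
qed


lemma compl_code2:
  assumes nm: "n = 2 * m + 1" and m: "2 \<le> m"
  shows "is_ic_solution n (compl_graph n (cycle_graph n)) m {0..<2^n}
           (lenc n (\<lambda>c. (\<lambda>l. ((c + 2 * l) mod n, l)) ` {..<m}))"
proof (rule linear_code[where ch="\<lambda>i l. (i + 2 * (n - l)) mod n"])
  fix i l assume i: "i < n" and l: "l < m"
  have n0: "0 < n" "3 \<le> n" using nm m by auto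
  define c where "c = (i + 2 * (n - l)) mod n"
  have cn: "c < n" unfolding c_def using n0 by simp
  have ci: "(c + 2 * l) mod n = i"
  proof -
    have "(c + 2 * l) mod n = (i + 2 * (n - l) + 2 * l) mod n" unfolding c_def by (rule mod_add_left_eq)
    also have "i + 2 * (n - l) + 2 * l = i + n * 2" using l nm by simp
    also have "(i + n * 2) mod n = i" using i by simp
    finally show ?thesis .
  qed
  have dc: "int n dvd int i + 2 * int n - 2 * int l - int c"
  proof -
    have "int c = (int i + 2 * int n - 2 * int l) mod int n"
      unfolding c_def using l nm by (simp add: zmod_int of_nat_diff algebra_simps)
    from dvd_of_mod_eq[OF this] show ?thesis .
  qed
  have adj: "compl_graph n (cycle_graph n) i ((c + 2 * l') mod n)" if l': "l' < m" "l' \<noteq> l" for l'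
  proof -
    define j where "j = (c + 2 * l') mod n"
    define d where "d = int l' - int l"
    have dj: "int n dvd int c + 2 * int l' - int j"
    proof -
      have "int j = (int c + 2 * int l') mod int n" unfolding j_def by (simp add: zmod_int)
      from dvd_of_mod_eq[OF this] show ?thesis .
    qed
    have key: "int n dvd int j - int i - 2 * d"
    proof -
      have "int n dvd (int c + 2 * int l' - int j) + (int i + 2 * int n - 2 * int l - int c)"
        using dj dc by (rule dvd_add)
      hence "int n dvd -((int c + 2 * int l' - int j) + (int i + 2 * int n - 2 * int l - int c)) + int n * 2"
        by (intro dvd_add) (simp_all only: dvd_minus_iff dvd_triv_left)
      thus ?thesis unfolding d_def by (simp add: algebra_simps)
    qed
    have dbound: "\<bar>2 * d\<bar> + 1 < int n" "d \<noteq> 0" unfolding d_def using l l' nm by auto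
    have "j \<noteq> i"
    proof
      assume "j = i"
      hence "int n dvd - (2 * d)" using key by simp
      hence "- (2 * d) = 0" by (rule int_dvd_small) (use dbound in simp)
      thus False using dbound by simp
    qed
    moreover have "\<not> cycle_graph n i j"
    proof
      assume "cycle_graph n i j"
      hence "int n dvd int j - int i - 1 \<or> int n dvd int j - int i + 1" by (rule cyc_int)
      thus False
      proof
        assume "int n dvd int j - int i - 1"
        hence "int n dvd (int j - int i - 1) - (int j - int i - 2 * d)" using key by (rule dvd_diff)
        hence "(int j - int i - 1) - (int j - int i - 2 * d) = 0"
          by (rule int_dvd_small) (use dbound in simp)
        thus False by presburger
      next
        assume "int n dvd int j - int i + 1"
        hence "int n dvd (int j - int i + 1) - (int j - int i - 2 * d)" using key by (rule dvd_diff)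
        hence "(int j - int i + 1) - (int j - int i - 2 * d) = 0"
          by (rule int_dvd_small) (use dbound in simp)
        thus False by presburger
      qed
    qed
    moreover have "j < n" unfolding j_def using n0 by simp
    ultimately show ?thesis unfolding compl_graph_def j_def using i by simp
  qed
  show "(i + 2 * (n - l)) mod n < n \<and> (i, l) \<in> (\<lambda>la. (((i + 2 * (n - l)) mod n + 2 * la) mod n, la)) ` {..<m} \<and>
       (\<forall>q\<in>(\<lambda>la. (((i + 2 * (n - l)) mod n + 2 * la) mod n, la)) ` {..<m}.
           q \<noteq> (i, l) \<longrightarrow> compl_graph n (cycle_graph n) i (fst q))"
    unfolding c_def[symmetric] using cn ci l adj by (auto intro!: image_eqI[of _ _ l])
qed simp


lemma alpha_eqI:
  assumes w: "indep_set n G S0" "card S0 = k"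
    and ub: "\<And>S. indep_set n G S \<Longrightarrow> card S \<le> k"
  shows "alpha n G = k"
  unfolding alpha_def
proof (rule Max_eqI)
  have "{S. indep_set n G S} \<subseteq> Pow {0..<n}" unfolding indep_set_def by auto
  hence "finite {S. indep_set n G S}" by (rule finite_subset) simp
  thus "finite (card ` {S. indep_set n G S})" by simp
  show "\<And>y. y \<in> card ` {S. indep_set n G S} \<Longrightarrow> y \<le> k" using ub by auto
  show "k \<in> card ` {S. indep_set n G S}" using w by auto
qed

lemma alpha_cyc:
  assumes n: "4 \<le> n"
  shows "alpha n (cycle_graph n) = n div 2"
proof (rule alpha_eqI)
  let ?S0 = "(\<lambda>j. 2 * j) ` {..<n div 2}"
  show "indep_set n (cycle_graph n) ?S0"
    unfolding indep_set_def
  proof (intro conjI ballI)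
    show "?S0 \<subseteq> {0..<n}" by auto
    fix i j assume i: "i \<in> ?S0" and j: "j \<in> ?S0"
    then obtain a b where ab: "a < n div 2" "b < n div 2" "i = 2 * a" "j = 2 * b" by auto
    show "\<not> cycle_graph n i j"
    proof
      assume "cycle_graph n i j"
      from cyc_cases[OF this] show False using ab by presburger
    qed
  qed
  show "card ?S0 = n div 2" by (simp add: card_image inj_on_def)
next
  fix S assume S: "indep_set n (cycle_graph n) S"
  hence Sn: "S \<subseteq> {0..<n}" and ind: "\<forall>i\<in>S. \<forall>j\<in>S. \<not> cycle_graph n i j" unfolding indep_set_def by auto
  let ?f = "\<lambda>i. (i + 1) mod n"
  have inj: "inj_on ?f {0..<n}"
  proof -
    have "inj_on (\<lambda>j. (1 + 1 * j) mod n) {..<n}" by (rule prog_inj) auto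
    thus ?thesis by (simp add: add.commute lessThan_atLeast0)
  qed
  have finS: "finite S" using Sn finite_subset by blast
  have "card (?f ` S) = card S" using inj Sn by (intro card_image) (rule inj_on_subset)
  moreover have "S \<inter> ?f ` S = {}"
  proof (rule ccontr)
    assume "S \<inter> ?f ` S \<noteq> {}"
    then obtain i where i: "i \<in> S" "(i + 1) mod n \<in> S" by auto
    have "cycle_graph n i ((i + 1) mod n)" using cyc_adj(1)[of i n] i Sn n by auto
    thus False using ind i by blast
  qed
  moreover have "S \<union> ?f ` S \<subseteq> {0..<n}" using Sn n by auto
  hence "card (S \<union> ?f ` S) \<le> n" using card_mono[of "{0..<n}"] by fastforce
  ultimately have "2 * card S \<le> n" using finS by (simp add: card_Un_disjoint)
  thus "card S \<le> n div 2" by simp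
qed

lemma alpha_compl:
  assumes n: "4 \<le> n"
  shows "alpha n (compl_graph n (cycle_graph n)) = 2"
proof (rule alpha_eqI)
  show "indep_set n (compl_graph n (cycle_graph n)) {0, 1}"
    unfolding indep_set_def compl_graph_def cycle_graph_def using n by auto
  show "card {0::nat, 1} = 2" by simp
next
  fix S assume S: "indep_set n (compl_graph n (cycle_graph n)) S"
  hence Sn: "S \<subseteq> {0..<n}" and ind: "\<forall>i\<in>S. \<forall>j\<in>S. \<not> compl_graph n (cycle_graph n) i j"
    unfolding indep_set_def by auto
  have adj: "cycle_graph n i j" if "i \<in> S" "j \<in> S" "i \<noteq> j" for i j
  proof -
    have "i < n" "j < n" using that Sn by auto
    thus ?thesis using ind that unfolding compl_graph_def by blast
  qed
  show "card S \<le> 2"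
  proof (rule ccontr)
    assume "\<not> card S \<le> 2"
    hence "3 \<le> card S" by simp
    then obtain T where T: "T \<subseteq> S" "card T = 3" by (meson obtain_subset_with_card_n)
    then obtain a b c where abc: "T = {a, b, c}" "a \<noteq> b" "b \<noteq> c" "a \<noteq> c" by (auto simp: card_3_iff)
    have "a \<in> S" "b \<in> S" "c \<in> S" using T abc by auto
    hence c1: "cycle_graph n a b" and c2: "cycle_graph n a c" and c3: "cycle_graph n b c"
      using adj abc by auto
    show False using cyc_cases[OF c1] cyc_cases[OF c2] cyc_cases[OF c3] abc(2-4) n by presburger
  qed
qed


lemma sol_icsol:
  assumes "is_ic_solution n G t P E"
  obtains D where "icsol n G t P E D"
  using assms unfolding is_ic_solution_def icsol_def by blast

lemma beta_t_ge:
  assumes t: "0 < t" and lb: "\<And>P E. is_ic_solution n G t P E \<Longrightarrow> L \<le> log 2 (real (card P))"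
  shows "L \<le> real (beta_t n G t)"
proof -
  have ex: "\<exists>k P E. is_ic_solution n G t P E \<and> k = nat \<lceil>log 2 (real (card P))\<rceil>"
    using exists_sol[OF t] by blast
  have "\<exists>P E. is_ic_solution n G t P E \<and> beta_t n G t = nat \<lceil>log 2 (real (card P))\<rceil>"
    unfolding beta_t_def using LeastI_ex[OF ex] .
  then obtain P E where sol: "is_ic_solution n G t P E" and b: "beta_t n G t = nat \<lceil>log 2 (real (card P))\<rceil>"
    by blast
  have cP: "card P \<ge> 1"
  proof -
    have "E ` messages n t \<subseteq> P" "finite P" using sol unfolding is_ic_solution_def by auto
    moreover have "E ` messages n t \<noteq> {}" using messages_ne by simp
    ultimately show ?thesis by (metis One_nat_def Suc_leI card_gt_0_iff subset_empty)
  qed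
  hence lg: "0 \<le> log 2 (real (card P))" by simp
  have "L \<le> log 2 (real (card P))" using lb[OF sol] .
  also have "\<dots> \<le> real_of_int \<lceil>log 2 (real (card P))\<rceil>" by (rule le_of_int_ceiling)
  also have "\<dots> = real (beta_t n G t)" unfolding b using lg by simp
  finally show ?thesis .
qed

lemma sol_lb_cyc:
  assumes n: "4 \<le> n" and sol: "is_ic_solution n (cycle_graph n) t P E"
  shows "real t * real n / 2 \<le> log 2 (real (card P))"
proof -
  obtain D where ic: "icsol n (cycle_graph n) t P E D" using sol_icsol[OF sol] by blast
  have "real t * real n / 2 \<le> icsol.p n t E"
  proof (cases "even n")
    case True
    then obtain m where "n = 2 * m" by blast
    moreover have "2 \<le> m" using n \<open>n = 2 * m\<close> by simp
    ultimately show ?thesis using icsol.cyc_even_lb[OF ic refl] by blast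
  next
    case False
    then obtain m where "n = 2 * m + 1" using oddE by blast
    moreover have "2 \<le> m" using n \<open>n = 2 * m + 1\<close> by simp
    ultimately show ?thesis using icsol.cyc_odd_lb[OF ic refl] by blast
  qed
  also have "\<dots> \<le> log 2 (real (card P))" using icsol.p_le[OF ic] .
  finally show ?thesis .
qed

lemma sol_lb_compl:
  assumes n: "4 \<le> n" and sol: "is_ic_solution n (compl_graph n (cycle_graph n)) t P E"
  shows "real t * real n / real (n div 2) \<le> log 2 (real (card P))"
proof -
  obtain D where ic: "icsol n (compl_graph n (cycle_graph n)) t P E D" using sol_icsol[OF sol] by blast
  have "real t * real n / real (n div 2) \<le> icsol.p n t E"
  proof (cases "even n")
    case True
    then obtain m where nm: "n = 2 * m" by blast
    moreover have m: "2 \<le> m" using n nm by simp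
    ultimately have "2 * real t \<le> icsol.p n t E" using icsol.compl_even_lb[OF ic refl] by blast
    moreover have "real t * real n / real (n div 2) = 2 * real t" using nm m by simp
    ultimately show ?thesis by simp
  next
    case False
    then obtain m where nm: "n = 2 * m + 1" using oddE by blast
    moreover have "2 \<le> m" using n nm by simp
    ultimately have "real t * real n / real m \<le> icsol.p n t E" using icsol.compl_odd_lb[OF ic refl] by blast
    moreover have "n div 2 = m" using nm by simp
    ultimately show ?thesis by simp
  qed
  also have "\<dots> \<le> log 2 (real (card P))" using icsol.p_le[OF ic] .
  finally show ?thesis .
qed

lemma beta_eqI:
  assumes lb: "\<And>t. 1 \<le> t \<Longrightarrow> c \<le> real (beta_t n G t) / real t"
    and w: "1 \<le> tw" "real (beta_t n G tw) / real tw \<le> c"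
  shows "beta n G = c"
proof -
  have bdd: "bdd_below ((\<lambda>t. real (beta_t n G t) / real t) ` {1..})"
    by (rule bdd_belowI[of _ 0]) auto
  have "c \<le> beta n G" unfolding beta_def
    by (rule cINF_greatest) (use lb in auto)
  moreover have "beta n G \<le> real (beta_t n G tw) / real tw" unfolding beta_def
    by (rule cINF_lower[OF bdd]) (use w in auto)
  ultimately show ?thesis using w by linarith
qed

theorem theorem5p1:
  fixes n :: nat
  assumes "n \<ge> 4"
  shows "beta n (cycle_graph n) = real n / 2
       \<and> beta n (compl_graph n (cycle_graph n)) = real n / real (n div 2)
       \<and> real (beta_t n (cycle_graph n) 1) = real_of_int \<lceil>beta n (cycle_graph n)\<rceil>
       \<and> real (alpha n (cycle_graph n)) = real_of_int \<lfloor>beta n (cycle_graph n)\<rfloor>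
       \<and> real (beta_t n (compl_graph n (cycle_graph n)) 1)
           = real_of_int \<lceil>beta n (compl_graph n (cycle_graph n))\<rceil>
       \<and> real (alpha n (compl_graph n (cycle_graph n)))
           = real_of_int \<lfloor>beta n (compl_graph n (cycle_graph n))\<rfloor>"
proof -
  have n: "4 \<le> n" "3 \<le> n" "0 < n" using assms by auto
  have h2: "real (n div 2) \<ge> 2" using n by simp
  have lbC: "real t * real n / 2 \<le> real (beta_t n (cycle_graph n) t)" if "0 < t" for t
    by (rule beta_t_ge[OF that]) (rule sol_lb_cyc[OF n(1)])
  have lbD: "real t * real n / real (n div 2) \<le> real (beta_t n (compl_graph n (cycle_graph n)) t)" if "0 < t" for t
    by (rule beta_t_ge[OF that]) (rule sol_lb_compl[OF n(1)])
  have bC: "beta n (cycle_graph n) = real n / 2"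
  proof (rule beta_eqI[where tw=2])
    fix t :: nat assume t: "1 \<le> t"
    have "real t * real n / 2 \<le> real (beta_t n (cycle_graph n) t)" using lbC t by simp
    thus "real n / 2 \<le> real (beta_t n (cycle_graph n) t) / real t" using t
      by (simp add: field_simps)
  next
    have "beta_t n (cycle_graph n) 2 \<le> n" by (rule beta_t_le[OF cyc_code2[OF n(2)]])
    thus "real (beta_t n (cycle_graph n) 2) / real (2::nat) \<le> real n / 2" by simp
  qed simp
  have bD: "beta n (compl_graph n (cycle_graph n)) = real n / real (n div 2)"
  proof (cases "even n")
    case True
    then obtain m where nm: "n = 2 * m" by blast
    show ?thesis
    proof (rule beta_eqI[where tw=1])
      fix t :: nat assume t: "1 \<le> t"
      have "real t * real n / real (n div 2) \<le> real (beta_t n (compl_graph n (cycle_graph n)) t)" using lbD t by simp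
      thus "real n / real (n div 2) \<le> real (beta_t n (compl_graph n (cycle_graph n)) t) / real t" using t
        by (simp add: field_simps)
    next
      have "beta_t n (compl_graph n (cycle_graph n)) 1 \<le> 2"
        using beta_t_le[OF compl_code1[OF n(2)]] True by simp
      thus "real (beta_t n (compl_graph n (cycle_graph n)) 1) / real (1::nat) \<le> real n / real (n div 2)"
        using nm n by simp
    qed simp
  next
    case False
    then obtain m where nm: "n = 2 * m + 1" using oddE by blast
    have m: "2 \<le> m" using nm n by simp
    show ?thesis
    proof (rule beta_eqI[where tw=m])
      fix t :: nat assume t: "1 \<le> t"
      have "real t * real n / real (n div 2) \<le> real (beta_t n (compl_graph n (cycle_graph n)) t)" using lbD t by simp
      thus "real n / real (n div 2) \<le> real (beta_t n (compl_graph n (cycle_graph n)) t) / real t" using t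
        by (simp add: field_simps)
    next
      have "beta_t n (compl_graph n (cycle_graph n)) m \<le> n"
        by (rule beta_t_le[OF compl_code2[OF nm m]])
      moreover have "n div 2 = m" using nm by simp
      ultimately show "real (beta_t n (compl_graph n (cycle_graph n)) m) / real m \<le> real n / real (n div 2)"
        using m by (simp add: divide_right_mono)
    qed (use m in simp)
  qed
  have b1C: "beta_t n (cycle_graph n) 1 = (n + 1) div 2"
  proof (rule antisym)
    show "beta_t n (cycle_graph n) 1 \<le> (n + 1) div 2" by (rule beta_t_le[OF cyc_code1[OF n(2)]])
    have "real n / 2 \<le> real (beta_t n (cycle_graph n) 1)" using lbC[of 1] by simp
    hence "n \<le> 2 * beta_t n (cycle_graph n) 1" by linarith
    thus "(n + 1) div 2 \<le> beta_t n (cycle_graph n) 1" by linarith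
  qed
  have cC: "\<lceil>real n / 2\<rceil> = int ((n + 1) div 2)"
    by (rule ceiling_unique) linarith+
  have fC: "\<lfloor>real n / 2\<rfloor> = int (n div 2)"
    by (rule floor_unique) linarith+
  have b1D: "real (beta_t n (compl_graph n (cycle_graph n)) 1) = real_of_int \<lceil>real n / real (n div 2)\<rceil>
          \<and> \<lfloor>real n / real (n div 2)\<rfloor> = 2"
  proof (cases "even n")
    case True
    then obtain m where nm: "n = 2 * m" by blast
    have m: "2 \<le> m" using nm n by simp
    have q: "real n / real (n div 2) = 2" using nm m by simp
    have "beta_t n (compl_graph n (cycle_graph n)) 1 \<le> 2"
      using beta_t_le[OF compl_code1[OF n(2)]] True by simp
    moreover have "2 \<le> real (beta_t n (compl_graph n (cycle_graph n)) 1)" using lbD[of 1] q by simp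
    ultimately have "beta_t n (compl_graph n (cycle_graph n)) 1 = 2" by linarith
    thus ?thesis using q by simp
  next
    case False
    then obtain m where nm: "n = 2 * m + 1" using oddE by blast
    have m: "2 \<le> m" using nm n by simp
    have d: "n div 2 = m" using nm by simp
    have q: "real n / real (n div 2) = 2 + 1 / real m" using nm m d by (simp add: field_simps)
    have q1: "0 < 1 / real m" "1 / real m \<le> 1 / 2" using m by (auto simp: field_simps)
    have "beta_t n (compl_graph n (cycle_graph n)) 1 \<le> 3"
      using beta_t_le[OF compl_code1[OF n(2)]] False by simp
    moreover have "2 + 1 / real m \<le> real (beta_t n (compl_graph n (cycle_graph n)) 1)" using lbD[of 1] q by simp
    ultimately have "beta_t n (compl_graph n (cycle_graph n)) 1 = 3" using q1 by linarith
    moreover have "\<lceil>2 + 1 / real m\<rceil> = 3" by (rule ceiling_unique) (use q1 in linarith)+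
    moreover have "\<lfloor>2 + 1 / real m\<rfloor> = 2" by (rule floor_unique) (use q1 in linarith)+
    ultimately show ?thesis using q by simp
  qed
  show ?thesis
    unfolding bC bD using b1C cC fC b1D alpha_cyc[OF n(1)] alpha_compl[OF n(1)] by simp
qed


end
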